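(* Let $M,K\in\mathbb{R}^{m\times m}$ be symmetric positive definite matrices, let $\nu>0$, $\omega>0$, $\theta=1+\nu\omega^2$, and let $H_1=\begin{pmatrix} M&0\\0&M\end{pmatrix}$, $H_2=\begin{pmatrix} K&0\\0&K\end{pmatrix}$ and \[ R=\frac{1}{\sqrt{\nu\theta}}\begin{pmatrix} -i\omega\nu I & \sqrt{\nu}\, I\\ -\sqrt{\nu}\, I & i\omega\nu I\end{pmatrix}, \] where $I$ is the $m\times m$ identity. For $\alpha>0$ define the MBAS iteration matrix \[ P_\alpha=(\alpha I_{2m}+\sqrt{\nu\theta}H_2)^{-1}(\alpha I_{2m}+\theta RH_1)(\alpha I_{2m}+\theta H_1)^{-1}(\alpha I_{2m}-\sqrt{\nu\theta}RH_2). \] Then for every $\alpha>0$, \[ \rho(P_\alpha)\le \eta_\alpha:=\max_{\lambda\in\sigma(M)}\frac{\sqrt{\alpha^2+\theta^2\lambda^2}}{\alpha+\theta\lambda}\;\max_{\mu\in\sigma(K)}\frac{\sqrt{\alpha^2+\nu\theta\mu^2}}{\alpha+\sqrt{\nu\theta}\,\mu}<1 . \] In particular the MBAS iteration $x^{(k+1)}=P_\alpha x^{(k)}+Q_\alpha\tilde b$ converges for every $\alpha>0$ and every initial guess.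
   Context: $\rho(\cdot)$ denotes the spectral radius and $\sigma(\cdot)$ the spectrum of a matrix. The MBAS iteration for the system $\tilde A x=\tilde b$, with $\tilde A=\theta H_1+\sqrt{\nu\theta}RH_2$, is: given $x^{(k)}$, solve $(\alpha I+\theta H_1)x^{(k+1/2)}=(\alpha I-\sqrt{\nu\theta}RH_2)x^{(k)}+\tilde b$ and then $(\alpha I+\sqrt{\nu\theta}H_2)x^{(k+1)}=(\alpha I+\theta RH_1)x^{(k+1/2)}-R\tilde b$; eliminating $x^{(k+1/2)}$ gives $x^{(k+1)}=P_\alpha x^{(k)}+Q_\alpha\tilde b$ with $Q_\alpha=\alpha(\alpha I+\sqrt{\nu\theta}H_2)^{-1}(I-R)(\alpha I+\theta H_1)^{-1}$. *)

theory Defs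
  imports Complex_Main "Jordan_Normal_Form.Spectral_Radius" "Jordan_Normal_Form.Gauss_Jordan_Elimination"
begin

definition spd_mat :: "nat \<Rightarrow> real mat \<Rightarrow> bool" where
  "spd_mat n A \<longleftrightarrow> A \<in> carrier_mat n n \<and> transpose_mat A = A \<and>
     (\<forall>x \<in> carrier_vec n. x \<noteq> 0\<^sub>v n \<longrightarrow> x \<bullet> (A *\<^sub>v x) > 0)"

text \<open>Matrix inverse (meaningful for invertible square matrices).\<close>
definition minv :: "complex mat \<Rightarrow> complex mat" where
  "minv A = the (mat_inverse A)"

definition cmat :: "real mat \<Rightarrow> complex mat" where
  "cmat A = map_mat complex_of_real A"

definition blkdiag2 :: "nat \<Rightarrow> real mat \<Rightarrow> complex mat" where
  "blkdiag2 m A = four_block_mat (cmat A) (0\<^sub>m m m) (0\<^sub>m m m) (cmat A)"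

definition Rmat :: "nat \<Rightarrow> real \<Rightarrow> real \<Rightarrow> complex mat" where
  "Rmat m \<nu> \<omega> = (let \<theta> = 1 + \<nu> * \<omega>\<^sup>2 in
     complex_of_real (1 / sqrt (\<nu> * \<theta>)) \<cdot>\<^sub>m
       four_block_mat ((- \<i> * complex_of_real (\<omega> * \<nu>)) \<cdot>\<^sub>m 1\<^sub>m m)
                      (complex_of_real (sqrt \<nu>) \<cdot>\<^sub>m 1\<^sub>m m)
                      (complex_of_real (- sqrt \<nu>) \<cdot>\<^sub>m 1\<^sub>m m)
                      ((\<i> * complex_of_real (\<omega> * \<nu>)) \<cdot>\<^sub>m 1\<^sub>m m))"

definition P_MBAS :: "nat \<Rightarrow> real mat \<Rightarrow> real mat \<Rightarrow> real \<Rightarrow> real \<Rightarrow> real \<Rightarrow> complex mat" where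
  "P_MBAS m M K \<nu> \<omega> \<alpha> = (let \<theta> = 1 + \<nu> * \<omega>\<^sup>2; s = sqrt (\<nu> * \<theta>);
      H1 = blkdiag2 m M; H2 = blkdiag2 m K; R = Rmat m \<nu> \<omega>; I = 1\<^sub>m (2*m);
      a = complex_of_real \<alpha> in
     minv (a \<cdot>\<^sub>m I + complex_of_real s \<cdot>\<^sub>m H2) * (a \<cdot>\<^sub>m I + complex_of_real \<theta> \<cdot>\<^sub>m (R * H1))
     * minv (a \<cdot>\<^sub>m I + complex_of_real \<theta> \<cdot>\<^sub>m H1) * (a \<cdot>\<^sub>m I - complex_of_real s \<cdot>\<^sub>m (R * H2)))"

definition Q_MBAS :: "nat \<Rightarrow> real mat \<Rightarrow> real mat \<Rightarrow> real \<Rightarrow> real \<Rightarrow> real \<Rightarrow> complex mat" where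
  "Q_MBAS m M K \<nu> \<omega> \<alpha> = (let \<theta> = 1 + \<nu> * \<omega>\<^sup>2; s = sqrt (\<nu> * \<theta>);
      H1 = blkdiag2 m M; H2 = blkdiag2 m K; R = Rmat m \<nu> \<omega>; I = 1\<^sub>m (2*m);
      a = complex_of_real \<alpha> in
     a \<cdot>\<^sub>m (minv (a \<cdot>\<^sub>m I + complex_of_real s \<cdot>\<^sub>m H2) * (I - R)
     * minv (a \<cdot>\<^sub>m I + complex_of_real \<theta> \<cdot>\<^sub>m H1)))"

definition eta_MBAS :: "real mat \<Rightarrow> real mat \<Rightarrow> real \<Rightarrow> real \<Rightarrow> real \<Rightarrow> real" where
  "eta_MBAS M K \<nu> \<omega> \<alpha> = (let \<theta> = 1 + \<nu> * \<omega>\<^sup>2 in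
     Max ((\<lambda>l. sqrt (\<alpha>\<^sup>2 + \<theta>\<^sup>2 * l\<^sup>2) / (\<alpha> + \<theta> * l)) ` spectrum M) *
     Max ((\<lambda>\<mu>. sqrt (\<alpha>\<^sup>2 + \<nu> * \<theta> * \<mu>\<^sup>2) / (\<alpha> + sqrt (\<nu> * \<theta>) * \<mu>)) ` spectrum K))"

end

theory Submission
  imports Defs
begin


definition nq :: "nat \<Rightarrow> complex vec \<Rightarrow> real" where
  "nq n u = (\<Sum>i=0..<n. (cmod (u$i))\<^sup>2)"
definition ip :: "nat \<Rightarrow> complex vec \<Rightarrow> complex vec \<Rightarrow> complex" where
  "ip n u v = (\<Sum>i=0..<n. u$i * cnj (v$i))"
definition herm :: "nat \<Rightarrow> complex mat \<Rightarrow> bool" where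
  "herm n Z \<longleftrightarrow> Z \<in> carrier_mat n n \<and> (\<forall>i<n. \<forall>j<n. Z$$(i,j) = cnj (Z$$(j,i)))"

lemma nq_nonneg: "nq n u \<ge> 0" unfolding nq_def by (intro sum_nonneg) auto

lemma nq_zero: assumes "nq n u = 0" "u \<in> carrier_vec n" shows "u = 0\<^sub>v n"
proof -
  have "\<forall>i\<in>{0..<n}. (cmod (u$i))\<^sup>2 = 0"
    using assms(1) unfolding nq_def by (subst sum_nonneg_eq_0_iff[symmetric]) auto
  then show ?thesis using assms(2) by (intro eq_vecI) auto
qed

lemma Re_ip_self: "Re (ip n u u) = nq n u"
  unfolding ip_def nq_def Re_sum by (intro sum.cong refl) (subst cmod_power2, simp add: power2_eq_square)

lemma ip_self: "ip n u u = complex_of_real (nq n u)"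
  unfolding ip_def nq_def of_real_sum
  by (intro sum.cong refl) (simp add: complex_mult_cnj cmod_power2)

lemma ip_cnj: "cnj (ip n u v) = ip n v u"
  unfolding ip_def by (simp add: mult.commute)

lemma mv: assumes "A \<in> carrier_mat n n" "v \<in> carrier_vec n" "i < n"
  shows "(A *\<^sub>v v) $ i = (\<Sum>j=0..<n. A$$(i,j) * v$j)"
  using assms by (auto simp: scalar_prod_def)

lemma herm_adj: assumes Z: "herm n Z" and u: "u \<in> carrier_vec n" and v: "v \<in> carrier_vec n"
  shows "ip n (Z *\<^sub>v u) v = ip n u (Z *\<^sub>v v)"
proof -
  have Zc: "Z \<in> carrier_mat n n" and h: "\<And>i j. i<n \<Longrightarrow> j<n \<Longrightarrow> Z$$(i,j) = cnj (Z$$(j,i))"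
    using Z unfolding herm_def by blast+
  have "ip n (Z *\<^sub>v u) v = (\<Sum>i=0..<n. (\<Sum>j=0..<n. Z$$(i,j) * u$j) * cnj (v$i))"
    unfolding ip_def by (intro sum.cong refl) (simp add: mv[OF Zc u])
  also have "\<dots> = (\<Sum>i=0..<n. \<Sum>j=0..<n. Z$$(i,j) * u$j * cnj (v$i))"
    by (simp add: sum_distrib_right)
  also have "\<dots> = (\<Sum>j=0..<n. \<Sum>i=0..<n. Z$$(i,j) * u$j * cnj (v$i))" by (rule sum.swap)
  also have "\<dots> = (\<Sum>j=0..<n. u$j * cnj (\<Sum>i=0..<n. Z$$(j,i) * v$i))"
  proof (intro sum.cong refl)
    fix j assume j: "j \<in> {0..<n}"
    have "(\<Sum>i=0..<n. Z$$(i,j) * u$j * cnj (v$i)) = (\<Sum>i=0..<n. u$j * (cnj (Z$$(j,i)) * cnj (v$i)))"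
    proof (intro sum.cong refl)
      fix i assume "i \<in> {0..<n}"
      then have "Z$$(i,j) = cnj (Z$$(j,i))" using j by (intro h) auto
      then show "Z$$(i,j) * u$j * cnj (v$i) = u$j * (cnj (Z$$(j,i)) * cnj (v$i))" by simp
    qed
    also have "\<dots> = u$j * cnj (\<Sum>i=0..<n. Z$$(j,i) * v$i)"
      by (simp add: sum_distrib_left)
    finally show "(\<Sum>i=0..<n. Z$$(i,j) * u$j * cnj (v$i)) = u$j * cnj (\<Sum>i=0..<n. Z$$(j,i) * v$i)" .
  qed
  also have "\<dots> = ip n u (Z *\<^sub>v v)"
    unfolding ip_def by (intro sum.cong refl) (simp add: mv[OF Zc v])
  finally show ?thesis .
qed

lemma cmod_lin: "(cmod (complex_of_real l * a - b))\<^sup>2 = l\<^sup>2 * (cmod a)\<^sup>2 - 2 * l * Re (a * cnj b) + (cmod b)\<^sup>2"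
  unfolding cmod_power2 by (simp add: power2_eq_square algebra_simps)

lemma CS: "(Re (ip n u v))\<^sup>2 \<le> nq n u * nq n v"
proof (cases "nq n u = 0")
  case True
  then have "\<forall>i\<in>{0..<n}. (cmod (u$i))\<^sup>2 = 0"
    unfolding nq_def by (subst sum_nonneg_eq_0_iff[symmetric]) auto
  then have "ip n u v = 0" unfolding ip_def by (intro sum.neutral) auto
  then show ?thesis using True by simp
next
  case False
  then have U: "nq n u > 0" using nq_nonneg[of n u] by linarith
  define p where "p = Re (ip n u v)"
  define l where "l = p / nq n u"
  have "0 \<le> (\<Sum>i=0..<n. (cmod (complex_of_real l * u$i - v$i))\<^sup>2)" by (intro sum_nonneg) auto
  also have "\<dots> = (\<Sum>i=0..<n. l\<^sup>2 * (cmod (u$i))\<^sup>2 - 2 * l * Re (u$i * cnj (v$i)) + (cmod (v$i))\<^sup>2)"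
    by (simp only: cmod_lin)
  also have "\<dots> = l\<^sup>2 * nq n u - 2 * l * (\<Sum>i=0..<n. Re (u$i * cnj (v$i))) + nq n v"
    unfolding nq_def by (simp only: sum.distrib sum_subtractf flip: sum_distrib_left)
  also have "(\<Sum>i=0..<n. Re (u$i * cnj (v$i))) = p" unfolding p_def ip_def Re_sum ..
  finally have "0 \<le> l\<^sup>2 * nq n u - 2 * l * p + nq n v" .
  then have "0 \<le> p\<^sup>2 / nq n u - 2 * p\<^sup>2 / nq n u + nq n v"
    unfolding l_def using U by (simp add: power2_eq_square field_simps)
  then have "p\<^sup>2 / nq n u \<le> nq n v" by simp
  then show ?thesis using U unfolding p_def by (simp add: field_simps)
qed



lemma herm_carrier: "herm n Z \<Longrightarrow> Z \<in> carrier_mat n n" unfolding herm_def by blast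

lemma herm_sq: assumes "herm n A" shows "herm n (A * A)"
proof -
  have A: "A \<in> carrier_mat n n" and h: "\<And>i j. i<n \<Longrightarrow> j<n \<Longrightarrow> A$$(i,j) = cnj (A$$(j,i))"
    using assms unfolding herm_def by blast+
  have "(A * A) $$ (i,j) = cnj ((A * A) $$ (j,i))" if i: "i<n" and j: "j<n" for i j
  proof -
    have "(A * A) $$ (i,j) = (\<Sum>k=0..<n. A$$(i,k) * A$$(k,j))"
      using A i j by (simp add: scalar_prod_def)
    also have "\<dots> = (\<Sum>k=0..<n. cnj (A$$(j,k) * A$$(k,i)))"
    proof (intro sum.cong refl)
      fix k assume "k \<in> {0..<n}"
      then have "A$$(i,k) = cnj (A$$(k,i))" "A$$(k,j) = cnj (A$$(j,k))" using i j by (auto intro: h)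
      then show "A$$(i,k) * A$$(k,j) = cnj (A$$(j,k) * A$$(k,i))" by simp
    qed
    also have "\<dots> = cnj ((A * A) $$ (j,i))"
      using A i j by (simp add: scalar_prod_def)
    finally show ?thesis .
  qed
  moreover have "A * A \<in> carrier_mat n n" using A by simp
  ultimately show ?thesis unfolding herm_def by blast
qed

lemma herm_smult: assumes "herm n A" shows "herm n (complex_of_real c \<cdot>\<^sub>m A)"
proof -
  have A: "A \<in> carrier_mat n n" and h: "\<And>i j. i<n \<Longrightarrow> j<n \<Longrightarrow> A$$(i,j) = cnj (A$$(j,i))"
    using assms unfolding herm_def by blast+
  have "(complex_of_real c \<cdot>\<^sub>m A) $$ (i,j) = cnj ((complex_of_real c \<cdot>\<^sub>m A) $$ (j,i))"
    if i: "i<n" and j: "j<n" for i j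
  proof -
    have "A$$(i,j) = cnj (A$$(j,i))" using h i j .
    then show ?thesis using A i j by simp
  qed
  moreover have "complex_of_real c \<cdot>\<^sub>m A \<in> carrier_mat n n" using A by simp
  ultimately show ?thesis unfolding herm_def by blast
qed

lemma pow_mat_add: assumes "A \<in> carrier_mat n n" shows "A ^\<^sub>m (a + b) = A ^\<^sub>m a * A ^\<^sub>m b"
proof (induction b)
  case 0 then show ?case using assms by simp
next
  case (Suc b)
  have "A ^\<^sub>m (a + Suc b) = A ^\<^sub>m (a + b) * A" by simp
  also have "\<dots> = A ^\<^sub>m a * A ^\<^sub>m b * A" using Suc by simp
  also have "\<dots> = A ^\<^sub>m a * (A ^\<^sub>m b * A)" using assms by (intro assoc_mult_mat) auto
  finally show ?case by simp
qed

lemma pow2_sq: assumes "A \<in> carrier_mat n n"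
  shows "A ^\<^sub>m (2 ^ Suc j) = A ^\<^sub>m (2^j) * A ^\<^sub>m (2^j)"
  using pow_mat_add[OF assms, of "2^j" "2^j"] by (simp add: mult_2)

lemma herm_pow2: assumes "herm n A" shows "herm n (A ^\<^sub>m (2^j))"
proof (induction j)
  case 0 then show ?case using assms by simp
next
  case (Suc j)
  have "A ^\<^sub>m (2 ^ Suc j) = A ^\<^sub>m (2^j) * A ^\<^sub>m (2^j)" by (rule pow2_sq[OF herm_carrier[OF assms]])
  then show ?case using herm_sq[OF Suc.IH] by simp
qed

lemma entry_bound: assumes B: "B \<in> carrier_mat n n" and nb: "norm_bound B C" and y: "y \<in> carrier_vec n"
  and i: "i < n"
  shows "cmod ((B *\<^sub>v y) $ i) \<le> C * (\<Sum>j=0..<n. cmod (y$j))"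
proof -
  have "cmod ((B *\<^sub>v y) $ i) = cmod (\<Sum>j=0..<n. B$$(i,j) * y$j)" using mv[OF B y i] by simp
  also have "\<dots> \<le> (\<Sum>j=0..<n. cmod (B$$(i,j) * y$j))" by (rule norm_sum)
  also have "\<dots> \<le> (\<Sum>j=0..<n. C * cmod (y$j))"
  proof (intro sum_mono)
    fix j assume "j \<in> {0..<n}"
    then have "cmod (B$$(i,j)) \<le> C" using nb B i unfolding norm_bound_def by auto
    then show "cmod (B$$(i,j) * y$j) \<le> C * cmod (y$j)" by (simp add: norm_mult mult_right_mono)
  qed
  finally show ?thesis by (simp add: sum_distrib_left)
qed

lemma nq_bound: assumes B: "B \<in> carrier_mat n n" and nb: "norm_bound B C" and y: "y \<in> carrier_vec n"
  shows "nq n (B *\<^sub>v y) \<le> real n * (C * (\<Sum>j=0..<n. cmod (y$j)))\<^sup>2"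
proof -
  have "nq n (B *\<^sub>v y) \<le> (\<Sum>i=0..<n. (C * (\<Sum>j=0..<n. cmod (y$j)))\<^sup>2)"
    unfolding nq_def
  proof (intro sum_mono)
    fix i assume "i \<in> {0..<n}"
    then show "(cmod ((B *\<^sub>v y) $ i))\<^sup>2 \<le> (C * (\<Sum>j=0..<n. cmod (y$j)))\<^sup>2"
      using entry_bound[OF B nb y] by (intro power_mono) auto
  qed
  then show ?thesis by simp
qed

lemma smult_mv: assumes "A \<in> carrier_mat n n" "v \<in> carrier_vec n" "i < n"
  shows "((c \<cdot>\<^sub>m A) *\<^sub>v v) $ i = c * (A *\<^sub>v v) $ i"
proof -
  have "((c \<cdot>\<^sub>m A) *\<^sub>v v) $ i = (\<Sum>j=0..<n. (c \<cdot>\<^sub>m A)$$(i,j) * v$j)"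
    by (rule mv) (use assms in auto)
  then show ?thesis using mv[OF assms] assms by (simp add: sum_distrib_left mult.assoc)
qed

lemma nq_smult: assumes "A \<in> carrier_mat n n" "v \<in> carrier_vec n"
  shows "nq n ((complex_of_real c \<cdot>\<^sub>m A) *\<^sub>v v) = c\<^sup>2 * nq n (A *\<^sub>v v)"
  unfolding nq_def using assms by (simp add: smult_mv norm_mult power_mult_distrib sum_distrib_left)



lemma herm_norm: assumes Z: "herm n Z" and n: "0 < n" and y: "y \<in> carrier_vec n"
  shows "nq n (Z *\<^sub>v y) \<le> (spectral_radius Z)\<^sup>2 * nq n y"
proof (rule ccontr)
  assume "\<not> ?thesis"
  then have gt: "nq n (Z *\<^sub>v y) > (spectral_radius Z)\<^sup>2 * nq n y" by simp
  define \<rho> where "\<rho> = spectral_radius Z"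
  have Zc: "Z \<in> carrier_mat n n" using herm_carrier[OF Z] .
  have \<rho>0: "\<rho> \<ge> 0" using spectral_radius_mem_max(1)[OF Zc n] unfolding \<rho>_def by auto
  have ny: "nq n y > 0"
  proof (rule ccontr)
    assume "\<not> nq n y > 0"
    then have ny0: "nq n y = 0" using nq_nonneg[of n y] by simp
    then have "y = 0\<^sub>v n" using nq_zero y by simp
    then have "Z *\<^sub>v y = 0\<^sub>v n" using Zc by (intro eq_vecI) (auto simp: scalar_prod_def)
    then have "nq n (Z *\<^sub>v y) = 0" unfolding nq_def by simp
    then show False using gt ny0 by simp
  qed
  define q where "q = nq n (Z *\<^sub>v y) / nq n y"
  have q: "q > \<rho>\<^sup>2" using gt ny unfolding q_def \<rho>_def by (simp add: field_simps)
  have sq: "sqrt q > \<rho>" using q \<rho>0 by (metis real_less_rsqrt)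
  define r where "r = (\<rho> + sqrt q) / 2"
  have r0: "r > 0" and r\<rho>: "r > \<rho>" and rq: "r < sqrt q" using sq \<rho>0 unfolding r_def by auto
  have r2q: "r\<^sup>2 < q" using rq r0 by (metis real_sqrt_less_iff real_sqrt_pow2_iff abs_of_pos real_sqrt_abs
      less_le_trans not_less power2_less_imp_less real_less_rsqrt)
  define W where "W = complex_of_real (1/r) \<cdot>\<^sub>m Z"
  have Wh: "herm n W" unfolding W_def by (rule herm_smult[OF Z])
  have Wc: "W \<in> carrier_mat n n" using herm_carrier[OF Wh] .
  have srW: "spectral_radius W < 1"
  proof -
    from spectral_radius_mem_max(1)[OF Wc n] obtain \<mu> where mu: "\<mu> \<in> spectrum W"
      and eq: "spectral_radius W = cmod \<mu>" by auto
    from mu obtain v where ev: "eigenvector W v \<mu>" unfolding spectrum_def eigenvalue_def by auto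
    then have v: "v \<in> carrier_vec n" "v \<noteq> 0\<^sub>v n" and Wv: "W *\<^sub>v v = \<mu> \<cdot>\<^sub>v v"
      using Wc unfolding eigenvector_def by auto
    have "Z *\<^sub>v v = (complex_of_real r * \<mu>) \<cdot>\<^sub>v v"
    proof (intro eq_vecI)
      fix i assume "i < dim_vec ((complex_of_real r * \<mu>) \<cdot>\<^sub>v v)"
      then have i: "i < n" using v by simp
      have "(W *\<^sub>v v) $ i = complex_of_real (1/r) * (Z *\<^sub>v v) $ i"
        unfolding W_def by (rule smult_mv[OF Zc v(1) i])
      then have "complex_of_real (1/r) * (Z *\<^sub>v v) $ i = \<mu> * v $ i" using Wv i v by simp
      moreover have e: "complex_of_real r * complex_of_real (1/r) = 1" using r0 by (simp flip: of_real_mult)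
      ultimately have "(Z *\<^sub>v v) $ i = complex_of_real r * (\<mu> * v $ i)"
        by (metis mult.assoc mult_1)
      then show "(Z *\<^sub>v v) $ i = ((complex_of_real r * \<mu>) \<cdot>\<^sub>v v) $ i" using i v by simp
    qed (use Zc v in simp)
    then have "eigenvector Z v (complex_of_real r * \<mu>)" using v Zc unfolding eigenvector_def by auto
    then have "complex_of_real r * \<mu> \<in> spectrum Z" unfolding spectrum_def eigenvalue_def by auto
    then have "cmod (complex_of_real r * \<mu>) \<le> \<rho>" unfolding \<rho>_def
      by (intro spectral_radius_mem_max(2)[OF Zc n]) auto
    then have "r * cmod \<mu> \<le> \<rho>" using r0 by (simp add: norm_mult)
    then have "r * cmod \<mu> < r * 1" using r\<rho> by simp
    then show ?thesis using eq r0 by simp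
  qed
  obtain C where C: "\<And>k. norm_bound (W ^\<^sub>m k) C"
    using spectral_radius_jnf_norm_bound_less_1_upper_triangular[OF Wc srW] by auto
  define D where "D = real n * (C * (\<Sum>j=0..<n. cmod (y$j)))\<^sup>2"
  define g where "g j = nq n (W ^\<^sub>m (2^j) *\<^sub>v y)" for j
  define \<tau> where "\<tau> = q / r\<^sup>2"
  have \<tau>1: "\<tau> > 1" using r2q r0 unfolding \<tau>_def by simp
  have gD: "g j \<le> D" for j unfolding g_def D_def by (rule nq_bound[OF _ C y]) (use Wc in simp)
  have g0: "g 0 = \<tau> * nq n y"
  proof -
    have "g 0 = nq n (W *\<^sub>v y)" unfolding g_def using Wc by simp
    also have "\<dots> = (1/r)\<^sup>2 * nq n (Z *\<^sub>v y)" unfolding W_def by (rule nq_smult[OF Zc y])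
    also have "\<dots> = \<tau> * nq n y" unfolding \<tau>_def q_def using ny by (simp add: field_simps)
    finally show ?thesis .
  qed
  have gstep: "(g j)\<^sup>2 \<le> nq n y * g (Suc j)" for j
  proof -
    define V where "V = W ^\<^sub>m (2^j)"
    have Vh: "herm n V" unfolding V_def by (rule herm_pow2[OF Wh])
    have Vc: "V \<in> carrier_mat n n" using herm_carrier[OF Vh] .
    have "g j = Re (ip n (V *\<^sub>v y) (V *\<^sub>v y))" unfolding g_def V_def Re_ip_self ..
    also have "ip n (V *\<^sub>v y) (V *\<^sub>v y) = ip n y (V *\<^sub>v (V *\<^sub>v y))"
      using herm_adj[OF Vh y mult_mat_vec_carrier[OF Vc y]] .
    also have "V *\<^sub>v (V *\<^sub>v y) = W ^\<^sub>m (2 ^ Suc j) *\<^sub>v y"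
      unfolding pow2_sq[OF Wc] V_def[symmetric] using Vc y by simp
    finally have "g j = Re (ip n y (W ^\<^sub>m (2 ^ Suc j) *\<^sub>v y))" .
    then show ?thesis using CS[of n y] unfolding g_def by simp
  qed
  have grow: "g j \<ge> \<tau> ^ (2^j) * nq n y" for j
  proof (induction j)
    case 0 then show ?case using g0 by simp
  next
    case (Suc j)
    have pos: "0 \<le> \<tau> ^ (2^j) * nq n y" using \<tau>1 ny by simp
    have "(\<tau> ^ (2^j) * nq n y)\<^sup>2 \<le> (g j)\<^sup>2" using Suc pos by (intro power_mono) auto
    also have "\<dots> \<le> nq n y * g (Suc j)" by (rule gstep)
    finally have "nq n y * (\<tau> ^ (2^Suc j) * nq n y) \<le> nq n y * g (Suc j)"
      by (simp add: power2_eq_square power_add mult_2 algebra_simps)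
    then show ?case using ny by simp
  qed
  obtain N where N: "D / nq n y < \<tau> ^ N" using real_arch_pow[OF \<tau>1] by auto
  have "\<tau> ^ N \<le> \<tau> ^ (2^N)" using \<tau>1 by (intro power_increasing) (auto intro: less_imp_le less_exp)
  also have "\<tau> ^ (2^N) * nq n y \<le> D" using grow[of N] gD[of N] by simp
  then have "\<tau> ^ (2^N) \<le> D / nq n y" using ny by (simp add: field_simps)
  finally show False using N by simp
qed



lemma sum_split2: "(\<Sum>j=0..<2*(m::nat). f j) = (\<Sum>j=0..<m. f j) + (\<Sum>j=0..<m. f (j + m))"
proof -
  have "(\<Sum>j=0..<2*m. f j) = (\<Sum>j=0..<m. f j) + (\<Sum>j=m..<2*m. f j)"
    by (rule sum.atLeastLessThan_concat[symmetric]) auto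
  also have "(\<Sum>j=m..<2*m. f j) = (\<Sum>j=0..<m. f (j + m))"
    using sum.shift_bounds_nat_ivl[of f 0 m m] by (simp add: mult_2)
  finally show ?thesis .
qed

lemma cmat_carrier: "S \<in> carrier_mat m m \<Longrightarrow> cmat S \<in> carrier_mat m m"
  unfolding cmat_def by simp

lemma blk_carrier: "S \<in> carrier_mat m m \<Longrightarrow> blkdiag2 m S \<in> carrier_mat (2*m) (2*m)"
  unfolding blkdiag2_def cmat_def by (simp add: mult_2)

lemma blk_entry: assumes "S \<in> carrier_mat m m" "i < 2*m" "j < 2*m"
  shows "blkdiag2 m S $$ (i,j) = (if i < m then if j < m then complex_of_real (S$$(i,j)) else 0
      else if j < m then 0 else complex_of_real (S$$(i-m,j-m)))"
  using assms unfolding blkdiag2_def cmat_def by (simp add: mult_2)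

lemma blk_mv: assumes S: "S \<in> carrier_mat m m" and v: "v \<in> carrier_vec (2*m)" and i: "i < m"
  shows "(blkdiag2 m S *\<^sub>v v) $ i = (\<Sum>j=0..<m. complex_of_real (S$$(i,j)) * v$j)"
    "(blkdiag2 m S *\<^sub>v v) $ (i+m) = (\<Sum>j=0..<m. complex_of_real (S$$(i,j)) * v$(j+m))"
proof -
  have B: "blkdiag2 m S \<in> carrier_mat (2*m) (2*m)" by (rule blk_carrier[OF S])
  have "(blkdiag2 m S *\<^sub>v v) $ i = (\<Sum>j=0..<2*m. blkdiag2 m S $$ (i,j) * v$j)"
    by (rule mv[OF B v]) (use i in simp)
  also have "\<dots> = (\<Sum>j=0..<m. complex_of_real (S$$(i,j)) * v$j)"
    unfolding sum_split2 using i by (simp add: blk_entry[OF S])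
  finally show "(blkdiag2 m S *\<^sub>v v) $ i = (\<Sum>j=0..<m. complex_of_real (S$$(i,j)) * v$j)" .
  have "(blkdiag2 m S *\<^sub>v v) $ (i+m) = (\<Sum>j=0..<2*m. blkdiag2 m S $$ (i+m,j) * v$j)"
    by (rule mv[OF B v]) (use i in simp)
  also have "\<dots> = (\<Sum>j=0..<m. complex_of_real (S$$(i,j)) * v$(j+m))"
    unfolding sum_split2 using i by (simp add: blk_entry[OF S])
  finally show "(blkdiag2 m S *\<^sub>v v) $ (i+m) = (\<Sum>j=0..<m. complex_of_real (S$$(i,j)) * v$(j+m))" .
qed

lemma sym_entry: assumes "S \<in> carrier_mat m m" "transpose_mat S = S" "i < m" "j < m"
  shows "S$$(i,j) = S$$(j,i)"
proof -
  have "transpose_mat S $$ (i,j) = S$$(j,i)" using assms(1,3,4) by simp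
  then show ?thesis using assms(2) by simp
qed

lemma blk_herm: assumes S: "S \<in> carrier_mat m m" and T: "transpose_mat S = S"
  shows "herm (2*m) (blkdiag2 m S)"
proof -
  have "blkdiag2 m S $$ (i,j) = cnj (blkdiag2 m S $$ (j,i))" if "i < 2*m" "j < 2*m" for i j
    using that sym_entry[OF S T, of "i-m" "j-m"] sym_entry[OF S T, of i j]
    by (simp add: blk_entry[OF S])
  then show ?thesis using blk_carrier[OF S] unfolding herm_def by blast
qed

lemma ip_smult_left: "ip n (c \<cdot>\<^sub>v v) v = c * ip n v v" if "v \<in> carrier_vec n"
  using that unfolding ip_def by (simp add: sum_distrib_left mult.assoc)

lemma herm_eig_real: assumes Z: "herm n Z" and ev: "eigenvector Z v \<mu>"
  shows "Im \<mu> = 0"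
proof -
  have Zc: "Z \<in> carrier_mat n n" by (rule herm_carrier[OF Z])
  have v: "v \<in> carrier_vec n" "v \<noteq> 0\<^sub>v n" and Zv: "Z *\<^sub>v v = \<mu> \<cdot>\<^sub>v v"
    using ev Zc unfolding eigenvector_def by auto
  have nv: "nq n v > 0"
  proof -
    have "nq n v \<noteq> 0" using nq_zero v by blast
    then show ?thesis using nq_nonneg[of n v] by linarith
  qed
  have "ip n (Z *\<^sub>v v) v = ip n v (Z *\<^sub>v v)" by (rule herm_adj[OF Z v(1) v(1)])
  then have "\<mu> * ip n v v = cnj (\<mu> * ip n v v)"
    unfolding Zv ip_smult_left[OF v(1)] by (metis ip_cnj ip_smult_left[OF v(1)])
  then have "\<mu> * complex_of_real (nq n v) = cnj \<mu> * complex_of_real (nq n v)"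
    unfolding ip_self by simp
  then have "\<mu> = cnj \<mu>" using nv by simp
  then show ?thesis by (metis complex_cnj_cancel_iff complex.expand complex_cnj_complex_of_real
        Im_complex_of_real Re_complex_of_real cnj.simps(2) neg_equal_zero)
qed



lemma real_eig_from: assumes S: "S \<in> carrier_mat m m" and k: "k < m" and wk: "w k \<noteq> (0::complex)"
  and eq: "\<And>i. i < m \<Longrightarrow> (\<Sum>j=0..<m. complex_of_real (S$$(i,j)) * w j) = complex_of_real r * w i"
  shows "eigenvalue S r"
proof -
  have eqR: "(\<Sum>j=0..<m. S$$(i,j) * Re (w j)) = r * Re (w i)" if "i < m" for i
    using arg_cong[OF eq[OF that], of Re] by (simp add: Re_sum)
  have eqI: "(\<Sum>j=0..<m. S$$(i,j) * Im (w j)) = r * Im (w i)" if "i < m" for i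
    using arg_cong[OF eq[OF that], of Im] by (simp add: Im_sum)
  define a where "a = vec m (\<lambda>j. Re (w j))"
  define b where "b = vec m (\<lambda>j. Im (w j))"
  have a: "a \<in> carrier_vec m" and b: "b \<in> carrier_vec m" unfolding a_def b_def by auto
  have Sa: "S *\<^sub>v a = r \<cdot>\<^sub>v a"
  proof (rule eq_vecI)
    fix i assume "i < dim_vec (r \<cdot>\<^sub>v a)" then have i: "i < m" using a by simp
    show "(S *\<^sub>v a) $ i = (r \<cdot>\<^sub>v a) $ i"
      using mv[OF S a i] eqR[OF i] i unfolding a_def by simp
  qed (use S a in simp)
  have Sb: "S *\<^sub>v b = r \<cdot>\<^sub>v b"
  proof (rule eq_vecI)
    fix i assume "i < dim_vec (r \<cdot>\<^sub>v b)" then have i: "i < m" using b by simp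
    show "(S *\<^sub>v b) $ i = (r \<cdot>\<^sub>v b) $ i"
      using mv[OF S b i] eqI[OF i] i unfolding b_def by simp
  qed (use S b in simp)
  show ?thesis
  proof (cases "a = 0\<^sub>v m")
    case False
    then have "eigenvector S a r" using S a Sa unfolding eigenvector_def by auto
    then show ?thesis unfolding eigenvalue_def by auto
  next
    case True
    have "a $ k = 0" using True k by simp
    then have "Re (w k) = 0" using k unfolding a_def by simp
    then have "Im (w k) \<noteq> 0" using wk complex.expand[of "w k" 0] by auto
    then have "b \<noteq> 0\<^sub>v m" using k unfolding b_def by (auto dest!: arg_cong[of _ _ "\<lambda>x. x $ k"])
    then have "eigenvector S b r" using S b Sb unfolding eigenvector_def by auto
    then show ?thesis unfolding eigenvalue_def by auto
  qed
qed

lemma blk_eig: assumes S: "S \<in> carrier_mat m m" and T: "transpose_mat S = S"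
  and ev: "eigenvalue (blkdiag2 m S) \<mu>"
  shows "\<mu> = complex_of_real (Re \<mu>) \<and> Re \<mu> \<in> spectrum S"
proof -
  have B: "blkdiag2 m S \<in> carrier_mat (2*m) (2*m)" by (rule blk_carrier[OF S])
  obtain v where evv: "eigenvector (blkdiag2 m S) v \<mu>" using ev unfolding eigenvalue_def by auto
  have im: "Im \<mu> = 0" by (rule herm_eig_real[OF blk_herm[OF S T] evv])
  then have mu: "\<mu> = complex_of_real (Re \<mu>)" by (simp add: complex.expand)
  have v: "v \<in> carrier_vec (2*m)" "v \<noteq> 0\<^sub>v (2*m)" and Bv: "blkdiag2 m S *\<^sub>v v = \<mu> \<cdot>\<^sub>v v"
    using evv B unfolding eigenvector_def by auto
  obtain k where k: "k < 2*m" and vk: "v $ k \<noteq> 0"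
    using v by (metis eq_vecI index_zero_vec(1,2) carrier_vecD)
  have ev1: "(\<Sum>j=0..<m. complex_of_real (S$$(i,j)) * v$j) = complex_of_real (Re \<mu>) * v$i" if "i < m" for i
  proof -
    have "(blkdiag2 m S *\<^sub>v v) $ i = (\<mu> \<cdot>\<^sub>v v) $ i" using Bv by simp
    then show ?thesis using blk_mv(1)[OF S v(1) that] that v mu by simp
  qed
  have ev2: "(\<Sum>j=0..<m. complex_of_real (S$$(i,j)) * v$(j+m)) = complex_of_real (Re \<mu>) * v$(i+m)" if "i < m" for i
  proof -
    have "(blkdiag2 m S *\<^sub>v v) $ (i+m) = (\<mu> \<cdot>\<^sub>v v) $ (i+m)" using Bv by simp
    then show ?thesis using blk_mv(2)[OF S v(1) that] that v mu by simp
  qed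
  have "eigenvalue S (Re \<mu>)"
  proof (cases "k < m")
    case True
    show ?thesis by (rule real_eig_from[OF S True, of "\<lambda>j. v$j"]) (use vk ev1 in auto)
  next
    case False
    then have k': "k - m < m" "k - m + m = k" using k by auto
    show ?thesis by (rule real_eig_from[OF S k'(1), of "\<lambda>j. v$(j+m)"]) (use vk ev2 k' in auto)
  qed
  then show ?thesis using mu unfolding spectrum_def by auto
qed

lemma spd_pos: assumes "spd_mat m S" and "l \<in> spectrum S" shows "l > 0"
proof -
  have S: "S \<in> carrier_mat m m" and pd: "\<And>x. x \<in> carrier_vec m \<Longrightarrow> x \<noteq> 0\<^sub>v m \<Longrightarrow> x \<bullet> (S *\<^sub>v x) > 0"
    using assms(1) unfolding spd_mat_def by auto
  obtain x where ev: "eigenvector S x l" using assms(2) unfolding spectrum_def eigenvalue_def by auto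
  then have x: "x \<in> carrier_vec m" "x \<noteq> 0\<^sub>v m" and Sx: "S *\<^sub>v x = l \<cdot>\<^sub>v x"
    using S unfolding eigenvector_def by auto
  have "x \<bullet> (S *\<^sub>v x) = l * (x \<bullet> x)" unfolding Sx using x by simp
  moreover have "x \<bullet> x \<ge> 0" unfolding scalar_prod_def by (intro sum_nonneg) auto
  ultimately show ?thesis using pd[OF x] by (metis mult_nonpos_nonneg not_less)
qed

lemma spec_nonempty: fixes S :: "real mat" assumes S: "S \<in> carrier_mat m m" and T: "transpose_mat S = S" and m: "m > 0"
  shows "spectrum S \<noteq> {}" "finite (spectrum S)"
proof -
  have B: "blkdiag2 m S \<in> carrier_mat (2*m) (2*m)" by (rule blk_carrier[OF S])
  obtain \<mu> where "\<mu> \<in> spectrum (blkdiag2 m S)" using spectrum_non_empty[OF B] m by auto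
  then have "Re \<mu> \<in> spectrum S" using blk_eig[OF S T] unfolding spectrum_def by auto
  then show "spectrum S \<noteq> {}" by auto
  show "finite (spectrum S)" by (rule card_finite_spectrum(1)[OF S])
qed



lemma lin_mv: fixes A :: "complex mat" assumes A: "A \<in> carrier_mat n n" and y: "y \<in> carrier_vec n" and i: "i < n"
  shows "((a \<cdot>\<^sub>m 1\<^sub>m n + t \<cdot>\<^sub>m A) *\<^sub>v y) $ i = a * y$i + t * (A *\<^sub>v y) $ i"
proof -
  have "(a \<cdot>\<^sub>m 1\<^sub>m n + t \<cdot>\<^sub>m A) *\<^sub>v y = (a \<cdot>\<^sub>m 1\<^sub>m n) *\<^sub>v y + (t \<cdot>\<^sub>m A) *\<^sub>v y"
    by (rule add_mult_distrib_mat_vec) (use A y in auto)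
  moreover have e1: "((a \<cdot>\<^sub>m 1\<^sub>m n) *\<^sub>v y)$i = a * y$i"
    using smult_mv[OF one_carrier_mat y i, of a] by (simp only: one_mult_mat_vec[OF y])
  moreover have e2: "((t \<cdot>\<^sub>m A) *\<^sub>v y)$i = t * (A *\<^sub>v y) $ i" by (rule smult_mv[OF A y i])
  ultimately show ?thesis using A y i by (simp del: index_mult_mat_vec)
qed

lemma lin_mv_minus: fixes A :: "complex mat" assumes A: "A \<in> carrier_mat n n" and y: "y \<in> carrier_vec n" and i: "i < n"
  shows "((a \<cdot>\<^sub>m 1\<^sub>m n - t \<cdot>\<^sub>m A) *\<^sub>v y) $ i = a * y$i - t * (A *\<^sub>v y) $ i"
proof -
  have "(a \<cdot>\<^sub>m 1\<^sub>m n - t \<cdot>\<^sub>m A) *\<^sub>v y = (a \<cdot>\<^sub>m 1\<^sub>m n) *\<^sub>v y - (t \<cdot>\<^sub>m A) *\<^sub>v y"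
    by (rule minus_mult_distrib_mat_vec) (use A y in auto)
  moreover have e1: "((a \<cdot>\<^sub>m 1\<^sub>m n) *\<^sub>v y)$i = a * y$i"
    using smult_mv[OF one_carrier_mat y i, of a] by (simp only: one_mult_mat_vec[OF y])
  moreover have e2: "((t \<cdot>\<^sub>m A) *\<^sub>v y)$i = t * (A *\<^sub>v y) $ i" by (rule smult_mv[OF A y i])
  ultimately show ?thesis using A y i by (simp del: index_mult_mat_vec)
qed

lemma shift_mv: fixes A :: "complex mat" assumes A: "A \<in> carrier_mat n n" and y: "y \<in> carrier_vec n" and i: "i < n"
  shows "((A - k \<cdot>\<^sub>m 1\<^sub>m n) *\<^sub>v y) $ i = (A *\<^sub>v y) $ i - k * y$i"
proof -
  have "(A - k \<cdot>\<^sub>m 1\<^sub>m n) *\<^sub>v y = A *\<^sub>v y - (k \<cdot>\<^sub>m 1\<^sub>m n) *\<^sub>v y"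
    by (rule minus_mult_distrib_mat_vec) (use A y in auto)
  moreover have e1: "((k \<cdot>\<^sub>m 1\<^sub>m n) *\<^sub>v y)$i = k * y$i"
    using smult_mv[OF one_carrier_mat y i, of k] by (simp only: one_mult_mat_vec[OF y])
  ultimately show ?thesis using A y i by (simp del: index_mult_mat_vec)
qed

lemma herm_shift: assumes "herm n A" shows "herm n (A - complex_of_real k \<cdot>\<^sub>m 1\<^sub>m n)"
proof -
  have A: "A \<in> carrier_mat n n" and h: "\<And>i j. i<n \<Longrightarrow> j<n \<Longrightarrow> A$$(i,j) = cnj (A$$(j,i))"
    using assms unfolding herm_def by blast+
  have "(A - complex_of_real k \<cdot>\<^sub>m 1\<^sub>m n) $$ (i,j) = cnj ((A - complex_of_real k \<cdot>\<^sub>m 1\<^sub>m n) $$ (j,i))"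
    if i: "i<n" and j: "j<n" for i j
  proof -
    have "A$$(i,j) = cnj (A$$(j,i))" using h i j .
    then show ?thesis using A i j by simp
  qed
  moreover have "A - complex_of_real k \<cdot>\<^sub>m 1\<^sub>m n \<in> carrier_mat n n" using A unfolding carrier_mat_def by simp
  ultimately show ?thesis unfolding herm_def by blast
qed

lemma cmod_comb: "(cmod (complex_of_real a * x + complex_of_real b * z))\<^sup>2
   = a\<^sup>2 * (cmod x)\<^sup>2 + 2 * a * b * Re (z * cnj x) + b\<^sup>2 * (cmod z)\<^sup>2"
  unfolding cmod_power2 by (simp add: power2_eq_square algebra_simps)

lemma cmod_diff: "(cmod (x - complex_of_real b * z))\<^sup>2
   = (cmod x)\<^sup>2 - 2 * b * Re (x * cnj z) + b\<^sup>2 * (cmod z)\<^sup>2"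
  unfolding cmod_power2 by (simp add: power2_eq_square algebra_simps)

definition fM :: "real \<Rightarrow> real \<Rightarrow> real \<Rightarrow> real \<Rightarrow> real" where
  "fM \<alpha> \<tau> \<tau>2 l = sqrt (\<alpha>\<^sup>2 + \<tau>2 * l\<^sup>2) / (\<alpha> + \<tau> * l)"

lemma fM_props: assumes "\<alpha> > 0" "\<tau> > 0" "\<tau>2 = \<tau>\<^sup>2" "l > 0"
  shows "0 < fM \<alpha> \<tau> \<tau>2 l" "fM \<alpha> \<tau> \<tau>2 l < 1"
    "fM \<alpha> \<tau> \<tau>2 l \<le> c \<Longrightarrow> \<alpha>\<^sup>2 + \<tau>\<^sup>2 * l\<^sup>2 \<le> c\<^sup>2 * (\<alpha> + \<tau> * l)\<^sup>2"
proof -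
  have D: "\<alpha> + \<tau> * l > 0" using assms by (intro add_pos_pos mult_pos_pos) auto
  have N: "\<alpha>\<^sup>2 + \<tau>2 * l\<^sup>2 > 0" using assms by (simp add: add_pos_nonneg)
  show "0 < fM \<alpha> \<tau> \<tau>2 l" unfolding fM_def using D N by simp
  have "\<alpha>\<^sup>2 + \<tau>2 * l\<^sup>2 < (\<alpha> + \<tau> * l)\<^sup>2" using assms by (simp add: power2_eq_square algebra_simps)
  then have "sqrt (\<alpha>\<^sup>2 + \<tau>2 * l\<^sup>2) < sqrt ((\<alpha> + \<tau> * l)\<^sup>2)" by (rule real_sqrt_less_mono)
  then have "sqrt (\<alpha>\<^sup>2 + \<tau>2 * l\<^sup>2) < \<alpha> + \<tau> * l" using D by simp
  then show "fM \<alpha> \<tau> \<tau>2 l < 1" unfolding fM_def using D by simp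
  assume "fM \<alpha> \<tau> \<tau>2 l \<le> c"
  then have "sqrt (\<alpha>\<^sup>2 + \<tau>2 * l\<^sup>2) \<le> c * (\<alpha> + \<tau> * l)" unfolding fM_def using D by (simp add: divide_le_eq)
  then have "(sqrt (\<alpha>\<^sup>2 + \<tau>2 * l\<^sup>2))\<^sup>2 \<le> (c * (\<alpha> + \<tau> * l))\<^sup>2" by (rule power_mono) (use N in simp)
  then show "\<alpha>\<^sup>2 + \<tau>\<^sup>2 * l\<^sup>2 \<le> c\<^sup>2 * (\<alpha> + \<tau> * l)\<^sup>2" using N assms(3) by (simp add: power_mult_distrib)
qed



lemma KL: fixes S :: "real mat"
  assumes spd: "spd_mat m S" and m: "0 < m" and a: "\<alpha> > 0" and t: "\<tau> > 0" and t2: "\<tau>2 = \<tau>\<^sup>2"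
    and y: "y \<in> carrier_vec (2*m)"
  defines "c \<equiv> Max (fM \<alpha> \<tau> \<tau>2 ` spectrum S)"
  shows "0 < c" "c < 1"
    "\<alpha>\<^sup>2 * nq (2*m) y + \<tau>\<^sup>2 * nq (2*m) (blkdiag2 m S *\<^sub>v y)
      \<le> c\<^sup>2 * nq (2*m) ((complex_of_real \<alpha> \<cdot>\<^sub>m 1\<^sub>m (2*m) + complex_of_real \<tau> \<cdot>\<^sub>m blkdiag2 m S) *\<^sub>v y)"
proof -
  have S: "S \<in> carrier_mat m m" and T: "transpose_mat S = S" using spd unfolding spd_mat_def by auto
  define E where "E = spectrum S"
  have fin: "finite E" and ne: "E \<noteq> {}" unfolding E_def using spec_nonempty[OF S T m] by auto
  have pos: "\<And>l. l \<in> E \<Longrightarrow> l > 0" unfolding E_def using spd_pos[OF spd] by auto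
  have cmem: "c \<in> fM \<alpha> \<tau> \<tau>2 ` E" unfolding c_def E_def[symmetric] using fin ne by (intro Max_in) auto
  have cge: "\<And>l. l \<in> E \<Longrightarrow> fM \<alpha> \<tau> \<tau>2 l \<le> c" unfolding c_def E_def[symmetric] using fin by auto
  from cmem obtain l0 where l0: "l0 \<in> E" "c = fM \<alpha> \<tau> \<tau>2 l0" by auto
  show c0: "0 < c" using fM_props(1)[OF a t t2 pos[OF l0(1)]] l0 by simp
  show c1: "c < 1" using fM_props(2)[OF a t t2 pos[OF l0(1)]] l0 by simp
  have q: "\<And>l. l \<in> E \<Longrightarrow> \<alpha>\<^sup>2 + \<tau>\<^sup>2 * l\<^sup>2 \<le> c\<^sup>2 * (\<alpha> + \<tau> * l)\<^sup>2"
    using fM_props(3)[OF a t t2 pos] cge by blast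
  have cc: "c\<^sup>2 < 1" using c0 c1 by (simp add: power_less_one_iff)
  define A0 where "A0 = (1 - c\<^sup>2) * \<tau>\<^sup>2"
  define \<kappa> where "\<kappa> = c\<^sup>2 * \<alpha> / ((1 - c\<^sup>2) * \<tau>)"
  define r2 where "r2 = \<kappa>\<^sup>2 - \<alpha>\<^sup>2 / \<tau>\<^sup>2"
  have A0: "A0 > 0" unfolding A0_def using cc t by simp
  have ne1: "1 - c\<^sup>2 \<noteq> 0" using cc by simp
  have k1: "A0 * \<kappa> = c\<^sup>2 * \<alpha> * \<tau>" unfolding A0_def \<kappa>_def using ne1 t by (simp add: field_simps power2_eq_square)
  have k3: "A0 * (\<alpha>\<^sup>2 / \<tau>\<^sup>2) = (1 - c\<^sup>2) * \<alpha>\<^sup>2" unfolding A0_def using t by (simp add: field_simps)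
  have hl: "(l - \<kappa>)\<^sup>2 \<le> r2" if l: "l \<in> E" for l
  proof -
    have "(l - \<kappa>)\<^sup>2 - r2 = l\<^sup>2 - 2 * \<kappa> * l + \<alpha>\<^sup>2 / \<tau>\<^sup>2" by (simp add: r2_def power2_eq_square algebra_simps)
    then have "A0 * ((l - \<kappa>)\<^sup>2 - r2) = A0 * (l\<^sup>2 - 2 * \<kappa> * l + \<alpha>\<^sup>2 / \<tau>\<^sup>2)" by simp
    also have "\<dots> = A0 * l\<^sup>2 - 2 * (A0 * \<kappa>) * l + A0 * (\<alpha>\<^sup>2 / \<tau>\<^sup>2)"
      by (simp add: algebra_simps)
    also have "\<dots> = \<alpha>\<^sup>2 + \<tau>\<^sup>2 * l\<^sup>2 - c\<^sup>2 * (\<alpha> + \<tau> * l)\<^sup>2"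
      unfolding k1 k3 by (simp add: A0_def power2_eq_square algebra_simps)
    also have "\<dots> \<le> 0" using q[OF l] by simp
    finally have "A0 * ((l - \<kappa>)\<^sup>2 - r2) \<le> 0" .
    then have "(l - \<kappa>)\<^sup>2 - r2 \<le> 0" using A0 by (simp add: mult_le_0_iff)
    then show ?thesis by simp
  qed
  have r2: "r2 \<ge> 0" using hl[OF l0(1)] by (meson order_trans zero_le_power2)
  define H where "H = blkdiag2 m S"
  have Hc: "H \<in> carrier_mat (2*m) (2*m)" unfolding H_def by (rule blk_carrier[OF S])
  have Hh: "herm (2*m) H" unfolding H_def by (rule blk_herm[OF S T])
  define X where "X = H - complex_of_real \<kappa> \<cdot>\<^sub>m 1\<^sub>m (2*m)"
  have Xh: "herm (2*m) X" unfolding X_def by (rule herm_shift[OF Hh])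
  have Xc: "X \<in> carrier_mat (2*m) (2*m)" by (rule herm_carrier[OF Xh])
  have m2: "0 < 2*m" using m by simp
  have srX: "spectral_radius X \<le> sqrt r2"
  proof -
    from spectral_radius_mem_max(1)[OF Xc m2] obtain \<mu> where mu: "\<mu> \<in> spectrum X"
      and eq: "spectral_radius X = cmod \<mu>" by auto
    from mu obtain v where ev: "eigenvector X v \<mu>" unfolding spectrum_def eigenvalue_def by auto
    then have v: "v \<in> carrier_vec (2*m)" "v \<noteq> 0\<^sub>v (2*m)" and Xv: "X *\<^sub>v v = \<mu> \<cdot>\<^sub>v v"
      using Xc unfolding eigenvector_def by auto
    have "H *\<^sub>v v = (\<mu> + complex_of_real \<kappa>) \<cdot>\<^sub>v v"
    proof (rule eq_vecI)
      fix i assume "i < dim_vec ((\<mu> + complex_of_real \<kappa>) \<cdot>\<^sub>v v)"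
      then have i: "i < 2*m" using v by simp
      have "(X *\<^sub>v v) $ i = (H *\<^sub>v v) $ i - complex_of_real \<kappa> * v $ i"
        unfolding X_def by (rule shift_mv[OF Hc v(1) i])
      then have "(H *\<^sub>v v) $ i = \<mu> * v $ i + complex_of_real \<kappa> * v $ i" using Xv i v by simp
      then show "(H *\<^sub>v v) $ i = ((\<mu> + complex_of_real \<kappa>) \<cdot>\<^sub>v v) $ i" using i v
        by (simp add: distrib_right)
    qed (use Hc v in simp)
    then have "eigenvector H v (\<mu> + complex_of_real \<kappa>)" using v Hc unfolding eigenvector_def by auto
    then have "eigenvalue (blkdiag2 m S) (\<mu> + complex_of_real \<kappa>)"
      unfolding eigenvalue_def H_def by auto
    from blk_eig[OF S T this] have
      e1: "\<mu> + complex_of_real \<kappa> = complex_of_real (Re (\<mu> + complex_of_real \<kappa>))"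
      and e2: "Re (\<mu> + complex_of_real \<kappa>) \<in> E" unfolding E_def by auto
    define l where "l = Re (\<mu> + complex_of_real \<kappa>)"
    have "\<mu> = complex_of_real (l - \<kappa>)" using e1 unfolding l_def by (simp add: of_real_diff)
    then have "cmod \<mu> = \<bar>l - \<kappa>\<bar>" by (simp only: norm_of_real)
    also have "\<dots> \<le> sqrt r2" using hl[OF e2[folded l_def]] by (simp add: real_le_rsqrt)
    finally show ?thesis using eq by simp
  qed
  define h where "h = H *\<^sub>v y"
  define N where "N = nq (2*m) y"
  define Q where "Q = nq (2*m) h"
  define P where "P = (\<Sum>i=0..<2*m. Re (h$i * cnj (y$i)))"
  have N0: "N \<ge> 0" unfolding N_def by (rule nq_nonneg)
  have "nq (2*m) (X *\<^sub>v y) \<le> (spectral_radius X)\<^sup>2 * N" unfolding N_def by (rule herm_norm[OF Xh m2 y])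
  also have "\<dots> \<le> r2 * N"
  proof (rule mult_right_mono[OF _ N0])
    have "0 \<le> spectral_radius X" using spectral_radius_mem_max(1)[OF Xc m2] by auto
    then have "(spectral_radius X)\<^sup>2 \<le> (sqrt r2)\<^sup>2" using srX by (intro power_mono) auto
    then show "(spectral_radius X)\<^sup>2 \<le> r2" using r2 by simp
  qed
  also have "nq (2*m) (X *\<^sub>v y) = Q - 2 * \<kappa> * P + \<kappa>\<^sup>2 * N"
  proof -
    have "nq (2*m) (X *\<^sub>v y) = (\<Sum>i=0..<2*m. (cmod (h$i))\<^sup>2 - 2 * \<kappa> * Re (h$i * cnj (y$i)) + \<kappa>\<^sup>2 * (cmod (y$i))\<^sup>2)"
      unfolding nq_def
    proof (intro sum.cong refl)
      fix i assume "i \<in> {0..<2*m}" then have i: "i < 2*m" by simp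
      have "(X *\<^sub>v y) $ i = h $ i - complex_of_real \<kappa> * y $ i"
        unfolding X_def h_def by (rule shift_mv[OF Hc y i])
      then show "(cmod ((X *\<^sub>v y) $ i))\<^sup>2 = (cmod (h$i))\<^sup>2 - 2 * \<kappa> * Re (h$i * cnj (y$i)) + \<kappa>\<^sup>2 * (cmod (y$i))\<^sup>2"
        by (simp add: cmod_diff)
    qed
    also have "\<dots> = Q - 2 * \<kappa> * P + \<kappa>\<^sup>2 * N"
      unfolding Q_def P_def N_def nq_def by (simp only: sum.distrib sum_subtractf flip: sum_distrib_left)
    finally show ?thesis .
  qed
  finally have ineq: "Q - 2 * \<kappa> * P + \<kappa>\<^sup>2 * N \<le> r2 * N" .
  have rhs: "nq (2*m) ((complex_of_real \<alpha> \<cdot>\<^sub>m 1\<^sub>m (2*m) + complex_of_real \<tau> \<cdot>\<^sub>m H) *\<^sub>v y)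
     = \<alpha>\<^sup>2 * N + 2 * \<alpha> * \<tau> * P + \<tau>\<^sup>2 * Q"
  proof -
    have "nq (2*m) ((complex_of_real \<alpha> \<cdot>\<^sub>m 1\<^sub>m (2*m) + complex_of_real \<tau> \<cdot>\<^sub>m H) *\<^sub>v y)
       = (\<Sum>i=0..<2*m. \<alpha>\<^sup>2 * (cmod (y$i))\<^sup>2 + 2 * \<alpha> * \<tau> * Re (h$i * cnj (y$i)) + \<tau>\<^sup>2 * (cmod (h$i))\<^sup>2)"
      unfolding nq_def
    proof (intro sum.cong refl)
      fix i assume "i \<in> {0..<2*m}" then have i: "i < 2*m" by simp
      have "((complex_of_real \<alpha> \<cdot>\<^sub>m 1\<^sub>m (2*m) + complex_of_real \<tau> \<cdot>\<^sub>m H) *\<^sub>v y) $ i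
          = complex_of_real \<alpha> * y $ i + complex_of_real \<tau> * h $ i"
        unfolding h_def by (rule lin_mv[OF Hc y i])
      then show "(cmod (((complex_of_real \<alpha> \<cdot>\<^sub>m 1\<^sub>m (2*m) + complex_of_real \<tau> \<cdot>\<^sub>m H) *\<^sub>v y) $ i))\<^sup>2
          = \<alpha>\<^sup>2 * (cmod (y$i))\<^sup>2 + 2 * \<alpha> * \<tau> * Re (h$i * cnj (y$i)) + \<tau>\<^sup>2 * (cmod (h$i))\<^sup>2"
        by (simp add: cmod_comb)
    qed
    also have "\<dots> = \<alpha>\<^sup>2 * N + 2 * \<alpha> * \<tau> * P + \<tau>\<^sup>2 * Q"
      unfolding Q_def P_def N_def nq_def by (simp only: sum.distrib flip: sum_distrib_left)
    finally show ?thesis .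
  qed
  have k2: "A0 * (\<kappa>\<^sup>2 - r2) = (1 - c\<^sup>2) * \<alpha>\<^sup>2" unfolding r2_def using k3 by simp
  have "A0 * (Q - 2 * \<kappa> * P + (\<kappa>\<^sup>2 - r2) * N) \<le> 0"
    using ineq A0 by (intro mult_nonneg_nonpos) (auto simp: algebra_simps)
  then have "A0 * Q - 2 * (A0 * \<kappa>) * P + (A0 * (\<kappa>\<^sup>2 - r2)) * N \<le> 0" by (simp add: algebra_simps)
  then have "(1 - c\<^sup>2) * \<tau>\<^sup>2 * Q - 2 * (c\<^sup>2 * \<alpha> * \<tau>) * P + ((1 - c\<^sup>2) * \<alpha>\<^sup>2) * N \<le> 0"
    unfolding k1 k2 by (simp add: A0_def)
  then have "\<alpha>\<^sup>2 * N + \<tau>\<^sup>2 * Q \<le> c\<^sup>2 * (\<alpha>\<^sup>2 * N + 2 * \<alpha> * \<tau> * P + \<tau>\<^sup>2 * Q)"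
    by (simp add: algebra_simps)
  then show "\<alpha>\<^sup>2 * nq (2*m) y + \<tau>\<^sup>2 * nq (2*m) (blkdiag2 m S *\<^sub>v y)
      \<le> c\<^sup>2 * nq (2*m) ((complex_of_real \<alpha> \<cdot>\<^sub>m 1\<^sub>m (2*m) + complex_of_real \<tau> \<cdot>\<^sub>m blkdiag2 m S) *\<^sub>v y)"
    using rhs unfolding N_def Q_def h_def H_def by simp
qed



definition FBR :: "nat \<Rightarrow> complex \<Rightarrow> complex \<Rightarrow> complex \<Rightarrow> complex \<Rightarrow> complex mat" where
  "FBR m a b d e = four_block_mat (a \<cdot>\<^sub>m 1\<^sub>m m) (b \<cdot>\<^sub>m 1\<^sub>m m) (d \<cdot>\<^sub>m 1\<^sub>m m) (e \<cdot>\<^sub>m 1\<^sub>m m)"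

lemma FBR_carrier: "FBR m a b d e \<in> carrier_mat (2*m) (2*m)"
  unfolding FBR_def by (simp add: mult_2)

lemma Rmat_eq: "Rmat m \<nu> \<omega> = complex_of_real (1 / sqrt (\<nu> * (1 + \<nu> * \<omega>\<^sup>2))) \<cdot>\<^sub>m
   FBR m (- \<i> * complex_of_real (\<omega> * \<nu>)) (complex_of_real (sqrt \<nu>)) (complex_of_real (- sqrt \<nu>))
     (\<i> * complex_of_real (\<omega> * \<nu>))"
  unfolding Rmat_def FBR_def Let_def ..

lemma Rmat_carrier: "Rmat m \<nu> \<omega> \<in> carrier_mat (2*m) (2*m)"
  unfolding Rmat_eq using FBR_carrier by simp

lemma FBR_comm: assumes C: "C \<in> carrier_mat m m"
  shows "FBR m a b d e * four_block_mat C (0\<^sub>m m m) (0\<^sub>m m m) C = four_block_mat C (0\<^sub>m m m) (0\<^sub>m m m) C * FBR m a b d e"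
proof -
  have o: "1\<^sub>m m \<in> carrier_mat m m" by simp
  have l: "(x \<cdot>\<^sub>m 1\<^sub>m m) * C = x \<cdot>\<^sub>m C" for x using C by (simp add: mult_smult_assoc_mat[OF o C])
  have r: "C * (x \<cdot>\<^sub>m 1\<^sub>m m) = x \<cdot>\<^sub>m C" for x using C by (simp add: mult_smult_distrib[OF C o])
  have z: "0\<^sub>m m m \<in> carrier_mat m m" by simp
  have ca: "x \<cdot>\<^sub>m 1\<^sub>m m \<in> carrier_mat m m" for x :: complex by simp
  show ?thesis unfolding FBR_def
    mult_four_block_mat[OF ca ca ca ca C z z C] mult_four_block_mat[OF C z z C ca ca ca ca]
    using C by (simp add: l r right_mult_zero_mat left_mult_zero_mat)
qed

lemma FBR_sq: "FBR m a b d e * FBR m a b d e = four_block_mat ((a*a + b*d) \<cdot>\<^sub>m 1\<^sub>m m) ((a*b + b*e) \<cdot>\<^sub>m 1\<^sub>m m)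
   ((d*a + e*d) \<cdot>\<^sub>m 1\<^sub>m m) ((d*b + e*e) \<cdot>\<^sub>m 1\<^sub>m m)"
proof -
  have o: "1\<^sub>m m \<in> carrier_mat m m" by simp
  have p: "(x \<cdot>\<^sub>m 1\<^sub>m m) * (y \<cdot>\<^sub>m 1\<^sub>m m) = (x * y) \<cdot>\<^sub>m 1\<^sub>m m" for x y :: complex
    by (rule eq_matI) auto
  have s: "(x \<cdot>\<^sub>m 1\<^sub>m m) + (y \<cdot>\<^sub>m 1\<^sub>m m) = (x + y) \<cdot>\<^sub>m 1\<^sub>m m" for x y :: complex
    by (rule eq_matI) (auto simp: distrib_right)
  have ca: "x \<cdot>\<^sub>m 1\<^sub>m m \<in> carrier_mat m m" for x :: complex by simp
  show ?thesis unfolding FBR_def mult_four_block_mat[OF ca ca ca ca ca ca ca ca]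
    by (simp add: p s)
qed

lemma R_sq: assumes "\<nu> > 0"
  shows "Rmat m \<nu> \<omega> * Rmat m \<nu> \<omega> = (-1) \<cdot>\<^sub>m 1\<^sub>m (2*m)"
proof -
  define k where "k = complex_of_real (1 / sqrt (\<nu> * (1 + \<nu> * \<omega>\<^sup>2)))"
  define a where "a = - \<i> * complex_of_real (\<omega> * \<nu>)"
  define b where "b = complex_of_real (sqrt \<nu>)"
  define d where "d = complex_of_real (- sqrt \<nu>)"
  define e where "e = \<i> * complex_of_real (\<omega> * \<nu>)"
  have F: "FBR m a b d e \<in> carrier_mat (2*m) (2*m)" by (rule FBR_carrier)
  have "Rmat m \<nu> \<omega> * Rmat m \<nu> \<omega> = k \<cdot>\<^sub>m FBR m a b d e * (k \<cdot>\<^sub>m FBR m a b d e)"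
    unfolding Rmat_eq k_def a_def b_def d_def e_def ..
  also have "\<dots> = k \<cdot>\<^sub>m (k \<cdot>\<^sub>m (FBR m a b d e * FBR m a b d e))"
    by (simp add: mult_smult_assoc_mat[OF F smult_carrier_mat[OF F]] mult_smult_distrib[OF F F])
  also have "\<dots> = (-1) \<cdot>\<^sub>m 1\<^sub>m (2*m)"
  proof -
    have t: "\<nu> * (1 + \<nu> * \<omega>\<^sup>2) > 0" using assms by (simp add: add_pos_nonneg)
    have kk: "k * k * (a * a + b * d) = -1"
    proof -
      have "a * a + b * d = - complex_of_real (\<nu> * (1 + \<nu> * \<omega>\<^sup>2))"
        unfolding a_def b_def d_def using assms
        by (simp add: power2_eq_square algebra_simps flip: of_real_mult)
      moreover have "k * k = complex_of_real (1 / (\<nu> * (1 + \<nu> * \<omega>\<^sup>2)))"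
        unfolding k_def using t by (simp flip: of_real_mult add: real_sqrt_mult_self)
      moreover have "1 + \<nu> * \<omega>\<^sup>2 \<noteq> 0" "\<nu> \<noteq> 0" using t assms by auto
      ultimately show ?thesis using t by (simp flip: of_real_mult)
    qed
    have kk2: "k * k * (d * b + e * e) = -1"
    proof -
      have "d * b + e * e = a * a + b * d" unfolding a_def b_def d_def e_def by (simp add: algebra_simps)
      then show ?thesis using kk by (simp only:)
    qed
    have z1: "a * b + b * e = 0" "d * a + e * d = 0" unfolding a_def e_def by (simp_all add: algebra_simps)
    show ?thesis
    proof (rule eq_matI)
      fix i j assume "i < dim_row ((-1) \<cdot>\<^sub>m 1\<^sub>m (2*m) :: complex mat)" "j < dim_col ((-1) \<cdot>\<^sub>m 1\<^sub>m (2*m) :: complex mat)"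
      then have i: "i < m + m" and j: "j < m + m" by auto
      show "(k \<cdot>\<^sub>m (k \<cdot>\<^sub>m (FBR m a b d e * FBR m a b d e))) $$ (i, j) = ((-1) \<cdot>\<^sub>m 1\<^sub>m (2*m)) $$ (i, j)"
        unfolding FBR_sq using i j kk kk2 z1 by (auto simp: mult_2 mult.assoc[symmetric])
    qed (auto simp: FBR_sq mult_2)
  qed
  finally show ?thesis .
qed

lemma R_H_comm: assumes S: "S \<in> carrier_mat m m"
  shows "Rmat m \<nu> \<omega> * blkdiag2 m S = blkdiag2 m S * Rmat m \<nu> \<omega>"
proof -
  have C: "cmat S \<in> carrier_mat m m" by (rule cmat_carrier[OF S])
  have B: "blkdiag2 m S \<in> carrier_mat (2*m) (2*m)" by (rule blk_carrier[OF S])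
  define F where "F = FBR m (- \<i> * complex_of_real (\<omega> * \<nu>)) (complex_of_real (sqrt \<nu>)) (complex_of_real (- sqrt \<nu>))
     (\<i> * complex_of_real (\<omega> * \<nu>))"
  have F: "F \<in> carrier_mat (2*m) (2*m)" unfolding F_def by (rule FBR_carrier)
  have "F * blkdiag2 m S = blkdiag2 m S * F" unfolding F_def blkdiag2_def by (rule FBR_comm[OF C])
  then show ?thesis unfolding Rmat_eq F_def[symmetric]
    by (simp add: mult_smult_assoc_mat[OF F B] mult_smult_distrib[OF B F])
qed

lemma R_skew_entry: assumes "\<nu> > 0" "i < 2*m" "j < 2*m"
  shows "Rmat m \<nu> \<omega> $$ (i,j) = - cnj (Rmat m \<nu> \<omega> $$ (j,i))"
  using assms unfolding Rmat_eq FBR_def by (auto simp: mult_2)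



lemma skew_adj: assumes Zc: "Z \<in> carrier_mat n n" and h: "\<And>i j. i<n \<Longrightarrow> j<n \<Longrightarrow> Z$$(i,j) = - cnj (Z$$(j,i))"
  and u: "u \<in> carrier_vec n" and v: "v \<in> carrier_vec n"
  shows "ip n (Z *\<^sub>v u) v = - ip n u (Z *\<^sub>v v)"
proof -
  have "ip n (Z *\<^sub>v u) v = (\<Sum>i=0..<n. (\<Sum>j=0..<n. Z$$(i,j) * u$j) * cnj (v$i))"
    unfolding ip_def by (intro sum.cong refl) (simp add: mv[OF Zc u])
  also have "\<dots> = (\<Sum>i=0..<n. \<Sum>j=0..<n. Z$$(i,j) * u$j * cnj (v$i))"
    by (simp add: sum_distrib_right)
  also have "\<dots> = (\<Sum>j=0..<n. \<Sum>i=0..<n. Z$$(i,j) * u$j * cnj (v$i))" by (rule sum.swap)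
  also have "\<dots> = (\<Sum>j=0..<n. - (u$j * cnj (\<Sum>i=0..<n. Z$$(j,i) * v$i)))"
  proof (intro sum.cong refl)
    fix j assume j: "j \<in> {0..<n}"
    have "(\<Sum>i=0..<n. Z$$(i,j) * u$j * cnj (v$i)) = (\<Sum>i=0..<n. - (u$j * (cnj (Z$$(j,i)) * cnj (v$i))))"
    proof (intro sum.cong refl)
      fix i assume "i \<in> {0..<n}"
      then have "Z$$(i,j) = - cnj (Z$$(j,i))" using j by (intro h) auto
      then show "Z$$(i,j) * u$j * cnj (v$i) = - (u$j * (cnj (Z$$(j,i)) * cnj (v$i)))" by simp
    qed
    also have "\<dots> = - (u$j * cnj (\<Sum>i=0..<n. Z$$(j,i) * v$i))"
      by (simp add: sum_distrib_left sum_negf)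
    finally show "(\<Sum>i=0..<n. Z$$(i,j) * u$j * cnj (v$i)) = - (u$j * cnj (\<Sum>i=0..<n. Z$$(j,i) * v$i))" .
  qed
  also have "\<dots> = - ip n u (Z *\<^sub>v v)"
    unfolding ip_def sum_negf by (simp add: mv[OF Zc v])
  finally show ?thesis .
qed

lemma ip_neg: assumes "\<And>i. i < n \<Longrightarrow> z$i = - x$i" shows "ip n u z = - ip n u x"
  unfolding ip_def sum_negf[symmetric] using assms by (intro sum.cong refl) auto

lemma NB_core: assumes Rc: "R \<in> carrier_mat n n"
  and skew: "\<And>x y. x \<in> carrier_vec n \<Longrightarrow> y \<in> carrier_vec n \<Longrightarrow> ip n (R *\<^sub>v x) y = - ip n x (R *\<^sub>v y)"
  and RR: "\<And>x i. x \<in> carrier_vec n \<Longrightarrow> i < n \<Longrightarrow> (R *\<^sub>v (R *\<^sub>v x)) $ i = - x $ i"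
  and Hh: "herm n H" and comm: "R * H = H * R" and y: "y \<in> carrier_vec n"
  and zc: "\<And>i. i < n \<Longrightarrow> z $ i = complex_of_real \<alpha> * y $ i + complex_of_real t * (R *\<^sub>v (H *\<^sub>v y)) $ i"
  shows "nq n z = \<alpha>\<^sup>2 * nq n y + t\<^sup>2 * nq n (H *\<^sub>v y)"
proof -
  have Hc: "H \<in> carrier_mat n n" by (rule herm_carrier[OF Hh])
  define h where "h = H *\<^sub>v y"
  define w where "w = R *\<^sub>v h"
  have hc: "h \<in> carrier_vec n" unfolding h_def using Hc y by simp
  have wc: "w \<in> carrier_vec n" unfolding w_def using Rc hc by simp
  have Ryc: "R *\<^sub>v y \<in> carrier_vec n" using Rc y by simp
  have "nq n z = (\<Sum>i=0..<n. \<alpha>\<^sup>2 * (cmod (y$i))\<^sup>2 + 2 * \<alpha> * t * Re (w$i * cnj (y$i)) + t\<^sup>2 * (cmod (w$i))\<^sup>2)"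
    unfolding nq_def
  proof (intro sum.cong refl)
    fix i assume "i \<in> {0..<n}" then have i: "i < n" by simp
    show "(cmod (z $ i))\<^sup>2 = \<alpha>\<^sup>2 * (cmod (y$i))\<^sup>2 + 2 * \<alpha> * t * Re (w$i * cnj (y$i)) + t\<^sup>2 * (cmod (w$i))\<^sup>2"
      unfolding zc[OF i] w_def h_def by (rule cmod_comb)
  qed
  also have "\<dots> = \<alpha>\<^sup>2 * nq n y + 2 * \<alpha> * t * Re (ip n w y) + t\<^sup>2 * nq n w"
    unfolding nq_def ip_def Re_sum by (simp only: sum.distrib flip: sum_distrib_left)
  also have "Re (ip n w y) = 0"
  proof -
    have "H *\<^sub>v (R *\<^sub>v y) = R *\<^sub>v (H *\<^sub>v y)"
    proof -
      have "H *\<^sub>v (R *\<^sub>v y) = (H * R) *\<^sub>v y" using Hc Rc y by simp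
      also have "\<dots> = (R * H) *\<^sub>v y" using comm by simp
      also have "\<dots> = R *\<^sub>v (H *\<^sub>v y)" using Hc Rc y by simp
      finally show ?thesis .
    qed
    then have "ip n w y = - ip n y w"
      unfolding w_def h_def using skew[OF hc y] herm_adj[OF Hh y Ryc] by (simp add: h_def)
    also have "ip n y w = cnj (ip n w y)" by (simp add: ip_cnj)
    finally have "ip n w y = - cnj (ip n w y)" .
    then have "Re (ip n w y) = - Re (ip n w y)" using arg_cong[of _ _ Re] by (metis complex_cnj_minus complex_cnj_cnj cnj.simps(1) uminus_complex.sel(1))
    then show ?thesis by simp
  qed
  also have "nq n w = nq n h"
  proof -
    have "ip n w w = - ip n h (R *\<^sub>v w)" unfolding w_def by (rule skew[OF hc]) (use wc w_def in simp)
    also have "ip n h (R *\<^sub>v w) = - ip n h h" unfolding w_def by (rule ip_neg) (rule RR[OF hc])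
    finally have "ip n w w = ip n h h" by simp
    then show ?thesis by (metis Re_ip_self)
  qed
  finally show ?thesis unfolding h_def by simp
qed

lemma nq_zero_vec: "nq n (0\<^sub>v n) = 0" unfolding nq_def by simp

lemma nq_smult_vec: assumes "w \<in> carrier_vec n" shows "nq n (k \<cdot>\<^sub>v w) = (cmod k)\<^sup>2 * nq n w"
  unfolding nq_def using assms by (simp add: norm_mult power_mult_distrib sum_distrib_left)

lemma minv_props: fixes A :: "complex mat"
  assumes A: "A \<in> carrier_mat n n" and inj: "\<forall>y \<in> carrier_vec n. A *\<^sub>v y = 0\<^sub>v n \<longrightarrow> y = 0\<^sub>v n"
  shows "minv A \<in> carrier_mat n n" "A * minv A = 1\<^sub>m n" "minv A * A = 1\<^sub>m n"
proof -
  have "det A \<noteq> 0" using det_0_iff_vec_prod_zero[OF A] inj by blast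
  then have U: "A \<in> Units (ring_mat TYPE(complex) n undefined)" by (rule det_non_zero_imp_unit[OF A])
  obtain B where B: "mat_inverse A = Some B"
  proof (cases "mat_inverse A")
    case None
    then show ?thesis using mat_inverse(1)[OF A None, of undefined] U by blast
  qed auto
  then have "minv A = B" unfolding minv_def by simp
  then show "minv A \<in> carrier_mat n n" "A * minv A = 1\<^sub>m n" "minv A * A = 1\<^sub>m n"
    using mat_inverse(2)[OF A B] by auto
qed



lemma R_skew: assumes "\<nu> > 0" "x \<in> carrier_vec (2*m)" "y \<in> carrier_vec (2*m)"
  shows "ip (2*m) (Rmat m \<nu> \<omega> *\<^sub>v x) y = - ip (2*m) x (Rmat m \<nu> \<omega> *\<^sub>v y)"
  by (rule skew_adj[OF Rmat_carrier _ assms(2,3)]) (rule R_skew_entry[OF assms(1)])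

lemma R_RR: assumes "\<nu> > 0" "x \<in> carrier_vec (2*m)" "i < 2*m"
  shows "(Rmat m \<nu> \<omega> *\<^sub>v (Rmat m \<nu> \<omega> *\<^sub>v x)) $ i = - x $ i"
proof -
  have "Rmat m \<nu> \<omega> *\<^sub>v (Rmat m \<nu> \<omega> *\<^sub>v x) = (Rmat m \<nu> \<omega> * Rmat m \<nu> \<omega>) *\<^sub>v x"
    using Rmat_carrier[of m \<nu> \<omega>] assms(2) by (simp del: index_mult_mat_vec)
  also have "\<dots> = ((-1) \<cdot>\<^sub>m 1\<^sub>m (2*m)) *\<^sub>v x" unfolding R_sq[OF assms(1)] ..
  finally have e: "Rmat m \<nu> \<omega> *\<^sub>v (Rmat m \<nu> \<omega> *\<^sub>v x) = ((-1) \<cdot>\<^sub>m 1\<^sub>m (2*m)) *\<^sub>v x" .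
  have "(((-1) \<cdot>\<^sub>m 1\<^sub>m (2*m)) *\<^sub>v x) $ i = (-1) * (1\<^sub>m (2*m) *\<^sub>v x) $ i"
    by (rule smult_mv[OF one_carrier_mat assms(2,3)])
  then show ?thesis unfolding e one_mult_mat_vec[OF assms(2)] by simp
qed

lemma NB_plus: fixes S :: "real mat"
  assumes S: "S \<in> carrier_mat m m" "transpose_mat S = S" and nu: "\<nu> > 0" and u: "u \<in> carrier_vec (2*m)"
  shows "nq (2*m) ((complex_of_real \<alpha> \<cdot>\<^sub>m 1\<^sub>m (2*m) + complex_of_real t \<cdot>\<^sub>m (Rmat m \<nu> \<omega> * blkdiag2 m S)) *\<^sub>v u)
     = \<alpha>\<^sup>2 * nq (2*m) u + t\<^sup>2 * nq (2*m) (blkdiag2 m S *\<^sub>v u)"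
proof (rule NB_core[OF Rmat_carrier R_skew[OF nu] R_RR[OF nu] blk_herm[OF S] R_H_comm[OF S(1)] u])
  fix i assume i: "i < 2*m"
  have RH: "Rmat m \<nu> \<omega> * blkdiag2 m S \<in> carrier_mat (2*m) (2*m)"
    using Rmat_carrier[of m \<nu> \<omega>] blk_carrier[OF S(1)] by simp
  have "((complex_of_real \<alpha> \<cdot>\<^sub>m 1\<^sub>m (2*m) + complex_of_real t \<cdot>\<^sub>m (Rmat m \<nu> \<omega> * blkdiag2 m S)) *\<^sub>v u) $ i
    = complex_of_real \<alpha> * u $ i + complex_of_real t * ((Rmat m \<nu> \<omega> * blkdiag2 m S) *\<^sub>v u) $ i"
    by (rule lin_mv[OF RH u i])
  also have "(Rmat m \<nu> \<omega> * blkdiag2 m S) *\<^sub>v u = Rmat m \<nu> \<omega> *\<^sub>v (blkdiag2 m S *\<^sub>v u)"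
    using Rmat_carrier[of m \<nu> \<omega>] blk_carrier[OF S(1)] u by (simp del: index_mult_mat_vec)
  finally show "((complex_of_real \<alpha> \<cdot>\<^sub>m 1\<^sub>m (2*m) + complex_of_real t \<cdot>\<^sub>m (Rmat m \<nu> \<omega> * blkdiag2 m S)) *\<^sub>v u) $ i
    = complex_of_real \<alpha> * u $ i + complex_of_real t * (Rmat m \<nu> \<omega> *\<^sub>v (blkdiag2 m S *\<^sub>v u)) $ i" .
qed

lemma NB_minus: fixes S :: "real mat"
  assumes S: "S \<in> carrier_mat m m" "transpose_mat S = S" and nu: "\<nu> > 0" and u: "u \<in> carrier_vec (2*m)"
  shows "nq (2*m) ((complex_of_real \<alpha> \<cdot>\<^sub>m 1\<^sub>m (2*m) - complex_of_real t \<cdot>\<^sub>m (Rmat m \<nu> \<omega> * blkdiag2 m S)) *\<^sub>v u)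
     = \<alpha>\<^sup>2 * nq (2*m) u + t\<^sup>2 * nq (2*m) (blkdiag2 m S *\<^sub>v u)"
proof -
  have "nq (2*m) ((complex_of_real \<alpha> \<cdot>\<^sub>m 1\<^sub>m (2*m) - complex_of_real t \<cdot>\<^sub>m (Rmat m \<nu> \<omega> * blkdiag2 m S)) *\<^sub>v u)
     = \<alpha>\<^sup>2 * nq (2*m) u + (-t)\<^sup>2 * nq (2*m) (blkdiag2 m S *\<^sub>v u)"
  proof (rule NB_core[OF Rmat_carrier R_skew[OF nu] R_RR[OF nu] blk_herm[OF S] R_H_comm[OF S(1)] u])
    fix i assume i: "i < 2*m"
    have RH: "Rmat m \<nu> \<omega> * blkdiag2 m S \<in> carrier_mat (2*m) (2*m)"
      using Rmat_carrier[of m \<nu> \<omega>] blk_carrier[OF S(1)] by simp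
    have "((complex_of_real \<alpha> \<cdot>\<^sub>m 1\<^sub>m (2*m) - complex_of_real t \<cdot>\<^sub>m (Rmat m \<nu> \<omega> * blkdiag2 m S)) *\<^sub>v u) $ i
      = complex_of_real \<alpha> * u $ i - complex_of_real t * ((Rmat m \<nu> \<omega> * blkdiag2 m S) *\<^sub>v u) $ i"
      by (rule lin_mv_minus[OF RH u i])
    also have "(Rmat m \<nu> \<omega> * blkdiag2 m S) *\<^sub>v u = Rmat m \<nu> \<omega> *\<^sub>v (blkdiag2 m S *\<^sub>v u)"
      using Rmat_carrier[of m \<nu> \<omega>] blk_carrier[OF S(1)] u by (simp del: index_mult_mat_vec)
    finally show "((complex_of_real \<alpha> \<cdot>\<^sub>m 1\<^sub>m (2*m) - complex_of_real t \<cdot>\<^sub>m (Rmat m \<nu> \<omega> * blkdiag2 m S)) *\<^sub>v u) $ i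
      = complex_of_real \<alpha> * u $ i + complex_of_real (- t) * (Rmat m \<nu> \<omega> *\<^sub>v (blkdiag2 m S *\<^sub>v u)) $ i"
      by simp
  qed
  then show ?thesis by simp
qed



lemma main_bound: fixes M K :: "real mat"
  assumes m: "m > 0" and sM: "spd_mat m M" and sK: "spd_mat m K" and nu: "\<nu> > 0" and om: "\<omega> > 0"
    and al: "\<alpha> > 0"
  shows "spectral_radius (P_MBAS m M K \<nu> \<omega> \<alpha>) \<le> eta_MBAS M K \<nu> \<omega> \<alpha>"
    "eta_MBAS M K \<nu> \<omega> \<alpha> < 1"
    "P_MBAS m M K \<nu> \<omega> \<alpha> \<in> carrier_mat (2*m) (2*m)"
    "Q_MBAS m M K \<nu> \<omega> \<alpha> \<in> carrier_mat (2*m) (2*m)"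
proof -
  have Mc: "M \<in> carrier_mat m m" and MT: "transpose_mat M = M" using sM unfolding spd_mat_def by auto
  have Kc: "K \<in> carrier_mat m m" and KT: "transpose_mat K = K" using sK unfolding spd_mat_def by auto
  define \<theta> where "\<theta> = 1 + \<nu> * \<omega>\<^sup>2"
  define s where "s = sqrt (\<nu> * \<theta>)"
  have th: "\<theta> > 0" unfolding \<theta>_def using nu by (simp add: add_pos_nonneg)
  have s0: "s > 0" unfolding s_def using nu th by simp
  have s2: "\<nu> * \<theta> = s\<^sup>2" unfolding s_def using nu th by simp
  define H1 where "H1 = blkdiag2 m M"
  define H2 where "H2 = blkdiag2 m K"
  define R where "R = Rmat m \<nu> \<omega>"
  define a where "a = complex_of_real \<alpha>"
  define I where "I = (1\<^sub>m (2*m) :: complex mat)"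
  define A1 where "A1 = a \<cdot>\<^sub>m I + complex_of_real \<theta> \<cdot>\<^sub>m H1"
  define B1 where "B1 = a \<cdot>\<^sub>m I + complex_of_real \<theta> \<cdot>\<^sub>m (R * H1)"
  define A2 where "A2 = a \<cdot>\<^sub>m I + complex_of_real s \<cdot>\<^sub>m H2"
  define B2 where "B2 = a \<cdot>\<^sub>m I - complex_of_real s \<cdot>\<^sub>m (R * H2)"
  have H1c: "H1 \<in> carrier_mat (2*m) (2*m)" unfolding H1_def by (rule blk_carrier[OF Mc])
  have H2c: "H2 \<in> carrier_mat (2*m) (2*m)" unfolding H2_def by (rule blk_carrier[OF Kc])
  have Rc: "R \<in> carrier_mat (2*m) (2*m)" unfolding R_def by (rule Rmat_carrier)
  have A1c: "A1 \<in> carrier_mat (2*m) (2*m)" unfolding A1_def I_def using H1c by simp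
  have A2c: "A2 \<in> carrier_mat (2*m) (2*m)" unfolding A2_def I_def using H2c by simp
  have B1c: "B1 \<in> carrier_mat (2*m) (2*m)" unfolding B1_def I_def using H1c Rc by simp
  have B2c: "B2 \<in> carrier_mat (2*m) (2*m)" unfolding B2_def I_def using H2c Rc by (intro minus_carrier_mat) simp
  have Peq: "P_MBAS m M K \<nu> \<omega> \<alpha> = minv A2 * B1 * minv A1 * B2"
    unfolding P_MBAS_def Let_def A1_def A2_def B1_def B2_def H1_def H2_def R_def I_def a_def s_def \<theta>_def ..
  define c1 where "c1 = Max (fM \<alpha> \<theta> (\<theta>\<^sup>2) ` spectrum M)"
  define c2 where "c2 = Max (fM \<alpha> s (\<nu> * \<theta>) ` spectrum K)"
  have f1: "fM \<alpha> \<theta> (\<theta>\<^sup>2) = (\<lambda>l. sqrt (\<alpha>\<^sup>2 + \<theta>\<^sup>2 * l\<^sup>2) / (\<alpha> + \<theta> * l))" by (rule ext) (simp add: fM_def)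
  have f2: "fM \<alpha> s (\<nu> * \<theta>) = (\<lambda>l. sqrt (\<alpha>\<^sup>2 + \<nu> * \<theta> * l\<^sup>2) / (\<alpha> + sqrt (\<nu> * \<theta>) * l))"
    by (rule ext) (simp add: fM_def s_def)
  have etaeq: "eta_MBAS M K \<nu> \<omega> \<alpha> = c1 * c2"
    unfolding c1_def c2_def f1 f2 unfolding eta_MBAS_def Let_def \<theta>_def s_def ..
  note KL1 = KL[OF sM m al th refl, folded c1_def]
  note KL2 = KL[OF sK m al s0 s2, folded c2_def]
  have c1: "0 < c1" "c1 < 1" using KL1(1,2)[OF zero_carrier_vec] by auto
  have c2: "0 < c2" "c2 < 1" using KL2(1,2)[OF zero_carrier_vec] by auto
  have KA1: "\<alpha>\<^sup>2 * nq (2*m) y + \<theta>\<^sup>2 * nq (2*m) (H1 *\<^sub>v y) \<le> c1\<^sup>2 * nq (2*m) (A1 *\<^sub>v y)"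
    if "y \<in> carrier_vec (2*m)" for y
    using KL1(3)[OF that] unfolding A1_def a_def I_def H1_def .
  have KA2: "\<alpha>\<^sup>2 * nq (2*m) y + s\<^sup>2 * nq (2*m) (H2 *\<^sub>v y) \<le> c2\<^sup>2 * nq (2*m) (A2 *\<^sub>v y)"
    if "y \<in> carrier_vec (2*m)" for y
    using KL2(3)[OF that] unfolding A2_def a_def I_def H2_def .
  have NB1: "nq (2*m) (B1 *\<^sub>v y) = \<alpha>\<^sup>2 * nq (2*m) y + \<theta>\<^sup>2 * nq (2*m) (H1 *\<^sub>v y)"
    if "y \<in> carrier_vec (2*m)" for y
    unfolding B1_def a_def I_def R_def H1_def by (rule NB_plus[OF Mc MT nu that])
  have NB2: "nq (2*m) (B2 *\<^sub>v y) = \<alpha>\<^sup>2 * nq (2*m) y + s\<^sup>2 * nq (2*m) (H2 *\<^sub>v y)"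
    if "y \<in> carrier_vec (2*m)" for y
    unfolding B2_def a_def I_def R_def H2_def by (rule NB_minus[OF Kc KT nu that])
  have inj_gen: "y = 0\<^sub>v (2*m)" if y: "y \<in> carrier_vec (2*m)" and le: "\<alpha>\<^sup>2 * nq (2*m) y + t * nq (2*m) (H *\<^sub>v y) \<le> c\<^sup>2 * nq (2*m) (A *\<^sub>v y)"
    and Ay: "A *\<^sub>v y = 0\<^sub>v (2*m)" and t: "t \<ge> 0" for y t H A c
  proof -
    have "\<alpha>\<^sup>2 * nq (2*m) y + t * nq (2*m) (H *\<^sub>v y) \<le> 0" using le unfolding Ay nq_zero_vec by simp
    moreover have "t * nq (2*m) (H *\<^sub>v y) \<ge> 0" using t nq_nonneg by simp
    ultimately have "\<alpha>\<^sup>2 * nq (2*m) y \<le> 0" by linarith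
    then have "nq (2*m) y = 0" using al nq_nonneg[of "2*m" y] by (simp add: mult_le_0_iff)
    then show ?thesis using nq_zero y by blast
  qed
  have inj1: "\<forall>y \<in> carrier_vec (2*m). A1 *\<^sub>v y = 0\<^sub>v (2*m) \<longrightarrow> y = 0\<^sub>v (2*m)"
  proof (intro ballI impI)
    fix y assume y: "y \<in> carrier_vec (2*m)" and Ay: "A1 *\<^sub>v y = 0\<^sub>v (2*m)"
    show "y = 0\<^sub>v (2*m)" by (rule inj_gen[OF y KA1[OF y] Ay]) simp
  qed
  have inj2: "\<forall>y \<in> carrier_vec (2*m). A2 *\<^sub>v y = 0\<^sub>v (2*m) \<longrightarrow> y = 0\<^sub>v (2*m)"
  proof (intro ballI impI)
    fix y assume y: "y \<in> carrier_vec (2*m)" and Ay: "A2 *\<^sub>v y = 0\<^sub>v (2*m)"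
    show "y = 0\<^sub>v (2*m)" by (rule inj_gen[OF y KA2[OF y] Ay]) simp
  qed
  note mi1 = minv_props[OF A1c inj1]
  note mi2 = minv_props[OF A2c inj2]
  have Pc: "minv A2 * B1 * minv A1 * B2 \<in> carrier_mat (2*m) (2*m)"
    using mi1(1) mi2(1) B1c B2c by (meson mult_carrier_mat)
  then show "P_MBAS m M K \<nu> \<omega> \<alpha> \<in> carrier_mat (2*m) (2*m)" unfolding Peq .
  have Qeq: "Q_MBAS m M K \<nu> \<omega> \<alpha> = a \<cdot>\<^sub>m (minv A2 * (I - R) * minv A1)"
    unfolding Q_MBAS_def Let_def A1_def A2_def H1_def H2_def R_def I_def a_def s_def \<theta>_def ..
  have IR: "I - R \<in> carrier_mat (2*m) (2*m)" using Rc by (intro minus_carrier_mat) simp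
  show "Q_MBAS m M K \<nu> \<omega> \<alpha> \<in> carrier_mat (2*m) (2*m)"
    unfolding Qeq using mi1(1) mi2(1) IR by (meson mult_carrier_mat smult_carrier_mat)
  have "c1 * c2 < 1 * c2" using c1 c2 by (intro mult_strict_right_mono) auto
  then show "eta_MBAS M K \<nu> \<omega> \<alpha> < 1" unfolding etaeq using c2 by linarith
  have m2: "0 < 2*m" using m by simp
  from spectral_radius_mem_max(1)[OF Pc m2] obtain lm where lam: "lm \<in> spectrum (minv A2 * B1 * minv A1 * B2)"
    and eq: "spectral_radius (minv A2 * B1 * minv A1 * B2) = cmod lm" by auto
  from lam obtain v where ev: "eigenvector (minv A2 * B1 * minv A1 * B2) v lm" unfolding spectrum_def eigenvalue_def by auto
  then have v: "v \<in> carrier_vec (2*m)" "v \<noteq> 0\<^sub>v (2*m)" and Pv: "(minv A2 * B1 * minv A1 * B2) *\<^sub>v v = lm \<cdot>\<^sub>v v"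
    using Pc unfolding eigenvector_def by auto
  define u where "u = minv A1 *\<^sub>v (B2 *\<^sub>v v)"
  have uc: "u \<in> carrier_vec (2*m)" unfolding u_def using mi1(1) B2c v by simp
  have A1u: "A1 *\<^sub>v u = B2 *\<^sub>v v"
  proof -
    have B2v: "B2 *\<^sub>v v \<in> carrier_vec (2*m)" using B2c v by simp
    have "A1 *\<^sub>v u = (A1 * minv A1) *\<^sub>v (B2 *\<^sub>v v)" unfolding u_def
      by (rule assoc_mult_mat_vec[OF A1c mi1(1) B2v, symmetric])
    also have "\<dots> = B2 *\<^sub>v v" unfolding mi1(2) by (rule one_mult_mat_vec[OF B2v])
    finally show ?thesis .
  qed
  have c12: "minv A2 * B1 \<in> carrier_mat (2*m) (2*m)" using mi2(1) B1c by simp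
  have c123: "minv A2 * B1 * minv A1 \<in> carrier_mat (2*m) (2*m)" using c12 mi1(1) by simp
  have B2v: "B2 *\<^sub>v v \<in> carrier_vec (2*m)" using B2c v by simp
  have "(minv A2 * B1 * minv A1 * B2) *\<^sub>v v = (minv A2 * B1 * minv A1) *\<^sub>v (B2 *\<^sub>v v)"
    by (rule assoc_mult_mat_vec[OF c123 B2c v(1)])
  also have "\<dots> = (minv A2 * B1) *\<^sub>v u" unfolding u_def by (rule assoc_mult_mat_vec[OF c12 mi1(1) B2v])
  also have "\<dots> = minv A2 *\<^sub>v (B1 *\<^sub>v u)" by (rule assoc_mult_mat_vec[OF mi2(1) B1c uc])
  finally have "(minv A2 * B1 * minv A1 * B2) *\<^sub>v v = minv A2 *\<^sub>v (B1 *\<^sub>v u)" .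
  then have e1: "minv A2 *\<^sub>v (B1 *\<^sub>v u) = lm \<cdot>\<^sub>v v" using Pv by simp
  have B1u: "B1 *\<^sub>v u = lm \<cdot>\<^sub>v (A2 *\<^sub>v v)"
  proof -
    have B1u: "B1 *\<^sub>v u \<in> carrier_vec (2*m)" using B1c uc by simp
    have "B1 *\<^sub>v u = (A2 * minv A2) *\<^sub>v (B1 *\<^sub>v u)" unfolding mi2(2) by (rule one_mult_mat_vec[OF B1u, symmetric])
    also have "\<dots> = A2 *\<^sub>v (minv A2 *\<^sub>v (B1 *\<^sub>v u))" by (rule assoc_mult_mat_vec[OF A2c mi2(1) B1u])
    also have "\<dots> = A2 *\<^sub>v (lm \<cdot>\<^sub>v v)" unfolding e1 ..
    also have "\<dots> = lm \<cdot>\<^sub>v (A2 *\<^sub>v v)" by (rule mult_mat_vec[OF A2c v(1)])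
    finally show ?thesis .
  qed
  have A2v: "A2 *\<^sub>v v \<in> carrier_vec (2*m)" using A2c v by simp
  have pos: "nq (2*m) (A2 *\<^sub>v v) > 0"
  proof -
    have "A2 *\<^sub>v v \<noteq> 0\<^sub>v (2*m)" using inj2 v by blast
    then have "nq (2*m) (A2 *\<^sub>v v) \<noteq> 0" using nq_zero[OF _ A2v] by blast
    then show ?thesis using nq_nonneg[of "2*m" "A2 *\<^sub>v v"] by linarith
  qed
  define N2 where "N2 = nq (2*m) (A2 *\<^sub>v v)"
  have e0: "(cmod lm)\<^sup>2 * N2 = nq (2*m) (B1 *\<^sub>v u)" unfolding N2_def by (simp only: B1u nq_smult_vec[OF A2v])
  have e1: "nq (2*m) (B1 *\<^sub>v u) \<le> c1\<^sup>2 * nq (2*m) (A1 *\<^sub>v u)"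
    by (simp only: NB1[OF uc]) (rule KA1[OF uc])
  have e3: "nq (2*m) (A1 *\<^sub>v u) \<le> c2\<^sup>2 * N2"
    unfolding N2_def by (simp only: A1u NB2[OF v(1)]) (rule KA2[OF v(1)])
  have e4: "c1\<^sup>2 * nq (2*m) (A1 *\<^sub>v u) \<le> c1\<^sup>2 * (c2\<^sup>2 * N2)"
    by (rule mult_left_mono[OF e3 zero_le_power2])
  have e5: "(c1 * c2)\<^sup>2 * N2 = c1\<^sup>2 * (c2\<^sup>2 * N2)" by (simp only: power_mult_distrib mult.assoc)
  have posN: "N2 > 0" unfolding N2_def by (rule pos)
  have "(cmod lm)\<^sup>2 * N2 = nq (2*m) (B1 *\<^sub>v u)" by (rule e0)
  also have "\<dots> \<le> c1\<^sup>2 * nq (2*m) (A1 *\<^sub>v u)" by (rule e1)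
  also have "\<dots> \<le> c1\<^sup>2 * (c2\<^sup>2 * N2)" by (rule e4)
  also have "\<dots> = (c1 * c2)\<^sup>2 * N2" by (rule e5[symmetric])
  finally have "(cmod lm)\<^sup>2 * N2 \<le> (c1 * c2)\<^sup>2 * N2" .
  then have "(cmod lm)\<^sup>2 \<le> (c1 * c2)\<^sup>2" by (rule mult_right_le_imp_le[OF _ posN])
  then have "cmod lm \<le> c1 * c2" by (rule power2_le_imp_le) (use c1 c2 in simp)
  then show "spectral_radius (P_MBAS m M K \<nu> \<omega> \<alpha>) \<le> eta_MBAS M K \<nu> \<omega> \<alpha>"
    unfolding Peq etaeq eq .
qed



lemma sr_scale: assumes A: "A \<in> carrier_mat n n" and n: "0 < n" and r: "spectral_radius A < r"
  shows "spectral_radius (complex_of_real (1/r) \<cdot>\<^sub>m A) < 1"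
proof -
  have \<rho>0: "spectral_radius A \<ge> 0" using spectral_radius_mem_max(1)[OF A n] by auto
  then have r0: "r > 0" using r by simp
  define W where "W = complex_of_real (1/r) \<cdot>\<^sub>m A"
  have Wc: "W \<in> carrier_mat n n" unfolding W_def using A by simp
  from spectral_radius_mem_max(1)[OF Wc n] obtain \<mu> where mu: "\<mu> \<in> spectrum W"
    and eq: "spectral_radius W = cmod \<mu>" by auto
  from mu obtain v where ev: "eigenvector W v \<mu>" unfolding spectrum_def eigenvalue_def by auto
  then have v: "v \<in> carrier_vec n" "v \<noteq> 0\<^sub>v n" and Wv: "W *\<^sub>v v = \<mu> \<cdot>\<^sub>v v"
    using Wc unfolding eigenvector_def by auto
  have "A *\<^sub>v v = (complex_of_real r * \<mu>) \<cdot>\<^sub>v v"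
  proof (intro eq_vecI)
    fix i assume "i < dim_vec ((complex_of_real r * \<mu>) \<cdot>\<^sub>v v)"
    then have i: "i < n" using v by simp
    have "(W *\<^sub>v v) $ i = complex_of_real (1/r) * (A *\<^sub>v v) $ i"
      unfolding W_def by (rule smult_mv[OF A v(1) i])
    then have "complex_of_real (1/r) * (A *\<^sub>v v) $ i = \<mu> * v $ i" using Wv i v by simp
    moreover have e: "complex_of_real r * complex_of_real (1/r) = 1" using r0 by (simp flip: of_real_mult)
    ultimately have "(A *\<^sub>v v) $ i = complex_of_real r * (\<mu> * v $ i)"
      by (metis mult.assoc mult_1)
    then show "(A *\<^sub>v v) $ i = ((complex_of_real r * \<mu>) \<cdot>\<^sub>v v) $ i" using i v by simp
  qed (use A v in simp)
  then have "eigenvector A v (complex_of_real r * \<mu>)" using v A unfolding eigenvector_def by auto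
  then have "complex_of_real r * \<mu> \<in> spectrum A" unfolding spectrum_def eigenvalue_def by auto
  then have "cmod (complex_of_real r * \<mu>) \<le> spectral_radius A"
    by (intro spectral_radius_mem_max(2)[OF A n]) auto
  then have "r * cmod \<mu> \<le> spectral_radius A" using r0 by (simp add: norm_mult)
  then have "r * cmod \<mu> < r * 1" using r by simp
  then show ?thesis using eq r0 unfolding W_def by simp
qed

lemma smult_smult_m: "a \<cdot>\<^sub>m (b \<cdot>\<^sub>m X) = (a * b) \<cdot>\<^sub>m (X :: complex mat)"
  by (rule eq_matI) auto

lemma pow_smult: assumes A: "A \<in> carrier_mat n n"
  shows "(c \<cdot>\<^sub>m A) ^\<^sub>m k = (c ^ k) \<cdot>\<^sub>m (A ^\<^sub>m k :: complex mat)"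
proof (induction k)
  case 0 then show ?case using A by (intro eq_matI) auto
next
  case (Suc k)
  have Ak: "A ^\<^sub>m k \<in> carrier_mat n n" using A by simp
  have "(c \<cdot>\<^sub>m A) ^\<^sub>m Suc k = (c ^ k \<cdot>\<^sub>m A ^\<^sub>m k) * (c \<cdot>\<^sub>m A)" using Suc by simp
  also have "\<dots> = c ^ k \<cdot>\<^sub>m (A ^\<^sub>m k * (c \<cdot>\<^sub>m A))" by (rule mult_smult_assoc_mat[OF Ak smult_carrier_mat[OF A]])
  also have "A ^\<^sub>m k * (c \<cdot>\<^sub>m A) = c \<cdot>\<^sub>m (A ^\<^sub>m k * A)" by (rule mult_smult_distrib[OF Ak A])
  finally show ?case by (simp add: smult_smult_m mult.commute)
qed

lemma geo_bound: assumes A: "A \<in> carrier_mat n n" and n: "0 < n" and sr: "spectral_radius A < 1"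
  shows "\<exists>r C. 0 < r \<and> r < 1 \<and> (\<forall>k. norm_bound (A ^\<^sub>m k) (C * r ^ k))"
proof -
  have \<rho>0: "spectral_radius A \<ge> 0" using spectral_radius_mem_max(1)[OF A n] by auto
  define r where "r = (spectral_radius A + 1) / 2"
  have r: "0 < r" "r < 1" "spectral_radius A < r" unfolding r_def using \<rho>0 sr by auto
  define W where "W = complex_of_real (1/r) \<cdot>\<^sub>m A"
  have Wc: "W \<in> carrier_mat n n" unfolding W_def using A by simp
  have "spectral_radius W < 1" unfolding W_def by (rule sr_scale[OF A n r(3)])
  then obtain C where C: "\<And>k. norm_bound (W ^\<^sub>m k) C"
    using spectral_radius_jnf_norm_bound_less_1_upper_triangular[OF Wc] by auto
  have AW: "A = complex_of_real r \<cdot>\<^sub>m W" unfolding W_def smult_smult_m using r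
    by (intro eq_matI) (auto simp flip: of_real_mult)
  have "norm_bound (A ^\<^sub>m k) (C * r ^ k)" for k
  proof -
    have eq: "A ^\<^sub>m k = (complex_of_real r ^ k) \<cdot>\<^sub>m (W ^\<^sub>m k)" unfolding AW by (rule pow_smult[OF Wc])
    show ?thesis unfolding norm_bound_def
    proof (intro allI impI)
      fix i j assume i: "i < dim_row (A ^\<^sub>m k)" and j: "j < dim_col (A ^\<^sub>m k)"
      then have i': "i < dim_row (W ^\<^sub>m k)" "j < dim_col (W ^\<^sub>m k)" using A Wc by auto
      have "cmod ((A ^\<^sub>m k) $$ (i,j)) = r ^ k * cmod ((W ^\<^sub>m k) $$ (i,j))"
        unfolding eq using i' r by (simp add: norm_mult norm_power)
      also have "\<dots> \<le> r ^ k * C" using C[of k] i' r unfolding norm_bound_def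
        by (intro mult_left_mono) auto
      finally show "cmod ((A ^\<^sub>m k) $$ (i,j)) \<le> C * r ^ k" by (simp add: mult.commute)
    qed
  qed
  then show ?thesis using r by blast
qed



lemma iter_conv: fixes P :: "complex mat"
  assumes P: "P \<in> carrier_mat n n" and n: "0 < n" and sr: "spectral_radius P < 1"
    and c0: "c0 \<in> carrier_vec n" and x0: "x0 \<in> carrier_vec n" and i: "i < n"
  shows "convergent (\<lambda>k. (((\<lambda>x. P *\<^sub>v x + c0) ^^ k) x0) $ i)"
proof -
  define f where "f = (\<lambda>x. P *\<^sub>v x + c0)"
  define x where "x k = (f ^^ k) x0" for k
  have xS: "x (Suc k) = P *\<^sub>v x k + c0" for k unfolding x_def f_def by simp
  have xc: "x k \<in> carrier_vec n" for k
  proof (induction k)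
    case 0 then show ?case using x0 by (simp add: x_def)
  next
    case (Suc k) show ?case unfolding xS using c0 unfolding carrier_vec_def by simp
  qed
  define e where "e = x 1 - x 0"
  have ec: "e \<in> carrier_vec n" unfolding e_def using xc[of 0] unfolding carrier_vec_def by simp
  have comm: "P ^\<^sub>m k * P = P * P ^\<^sub>m k" for k
  proof -
    have "P ^\<^sub>m (k + 1) = P ^\<^sub>m k * P ^\<^sub>m 1" by (rule pow_mat_add[OF P])
    moreover have "P ^\<^sub>m (1 + k) = P ^\<^sub>m 1 * P ^\<^sub>m k" by (rule pow_mat_add[OF P])
    moreover have "P ^\<^sub>m 1 = P" using P by simp
    ultimately show ?thesis by simp
  qed
  have diff: "x (Suc k) - x k = P ^\<^sub>m k *\<^sub>v e" for k
  proof (induction k)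
    case 0 then show ?case unfolding e_def using P ec by (simp add: e_def)
  next
    case (Suc k)
    have "x (Suc (Suc k)) - x (Suc k) = P *\<^sub>v x (Suc k) - P *\<^sub>v x k"
      unfolding xS[of "Suc k"] xS[of k] using P xc c0 by (intro eq_vecI) auto
    also have "\<dots> = P *\<^sub>v (x (Suc k) - x k)" by (rule mult_minus_distrib_mat_vec[symmetric, OF P xc xc])
    also have "\<dots> = P *\<^sub>v (P ^\<^sub>m k *\<^sub>v e)" unfolding Suc ..
    also have "\<dots> = (P * P ^\<^sub>m k) *\<^sub>v e" by (rule assoc_mult_mat_vec[symmetric, OF P pow_carrier_mat[OF P] ec])
    also have "\<dots> = P ^\<^sub>m (Suc k) *\<^sub>v e" using comm[of k] by simp
    finally show ?case .
  qed
  define g where "g j = (P ^\<^sub>m j *\<^sub>v e) $ i" for j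
  have xi: "x k $ i = x0 $ i + (\<Sum>j<k. g j)" for k
  proof (induction k)
    case 0 then show ?case by (simp add: x_def)
  next
    case (Suc k)
    have h1: "(x (Suc k) - x k) $ i = g k" unfolding g_def by (simp only: diff)
    have h2: "(x (Suc k) - x k) $ i = x (Suc k) $ i - x k $ i"
    proof -
      have dk: "dim_vec (x k) = n" using xc[of k] by (rule carrier_vecD)
      show ?thesis by (rule index_minus_vec(1)) (simp only: dk i)
    qed
    have "x (Suc k) $ i - x k $ i = g k" using h1 h2 by simp
    then have "x (Suc k) $ i = g k + x k $ i" by (simp only: diff_eq_eq)
    also have "\<dots> = x0 $ i + (\<Sum>j<Suc k. g j)" unfolding Suc sum.lessThan_Suc by (simp only: ac_simps)
    finally show ?case .
  qed
  obtain r C where r: "0 < r" "r < 1" and C: "\<And>k. norm_bound (P ^\<^sub>m k) (C * r ^ k)"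
    using geo_bound[OF P n sr] by auto
  define E where "E = (\<Sum>l=0..<n. cmod (e$l))"
  have gb: "norm (g j) \<le> C * E * r ^ j" for j
  proof -
    have "cmod ((P ^\<^sub>m j *\<^sub>v e) $ i) \<le> (C * r ^ j) * E" unfolding E_def
      by (rule entry_bound[OF _ C ec i]) (use P in simp)
    then show ?thesis unfolding g_def by (simp add: mult_ac)
  qed
  have "summable (\<lambda>j. r ^ j)" by (rule summable_geometric) (use r in simp)
  then have sum1: "summable (\<lambda>j. C * E * r ^ j)" by (rule summable_mult)
  have sg: "summable g"
  proof (rule summable_comparison_test'[where N=0])
    show "summable (\<lambda>j. C * E * r ^ j)" by (rule sum1)
    show "norm (g n) \<le> C * E * r ^ n" if "0 \<le> n" for n by (rule gb)
  qed
  have "(\<lambda>k. x0 $ i + (\<Sum>j<k. g j)) \<longlonglongrightarrow> x0 $ i + suminf g"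
    by (intro tendsto_add tendsto_const summable_LIMSEQ[OF sg])
  then have "convergent (\<lambda>k. x k $ i)" unfolding xi by (rule convergentI)
  then show ?thesis unfolding x_def f_def .
qed


theorem theorem1:
  fixes m :: nat and M K :: "real mat" and \<nu> \<omega> :: real
  assumes "m > 0"
    and "spd_mat m M" and "spd_mat m K"
    and "\<nu> > 0" and "\<omega> > 0"
  shows "\<forall>\<alpha>>0.
     spectral_radius (P_MBAS m M K \<nu> \<omega> \<alpha>) \<le> eta_MBAS M K \<nu> \<omega> \<alpha>
   \<and> eta_MBAS M K \<nu> \<omega> \<alpha> < 1
   \<and> (\<forall>b x0. b \<in> carrier_vec (2*m) \<longrightarrow> x0 \<in> carrier_vec (2*m) \<longrightarrow>
        (\<forall>i < 2*m. convergent (\<lambda>k.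
           (((\<lambda>x. P_MBAS m M K \<nu> \<omega> \<alpha> *\<^sub>v x + Q_MBAS m M K \<nu> \<omega> \<alpha> *\<^sub>v b) ^^ k) x0) $ i)))"
proof (intro allI impI)
  fix \<alpha> :: real assume al: "\<alpha> > 0"
  note mb = main_bound[OF assms(1-5) al]
  have sr: "spectral_radius (P_MBAS m M K \<nu> \<omega> \<alpha>) < 1" using mb(1,2) by linarith
  have m2: "0 < 2*m" using assms(1) by simp
  have conv: "\<forall>b x0. b \<in> carrier_vec (2*m) \<longrightarrow> x0 \<in> carrier_vec (2*m) \<longrightarrow>
        (\<forall>i < 2*m. convergent (\<lambda>k.
           (((\<lambda>x. P_MBAS m M K \<nu> \<omega> \<alpha> *\<^sub>v x + Q_MBAS m M K \<nu> \<omega> \<alpha> *\<^sub>v b) ^^ k) x0) $ i))"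
  proof (intro allI impI)
    fix b x0 :: "complex vec" and i :: nat assume b: "b \<in> carrier_vec (2*m)" and x0: "x0 \<in> carrier_vec (2*m)" and i: "i < 2*m"
    have c0: "Q_MBAS m M K \<nu> \<omega> \<alpha> *\<^sub>v b \<in> carrier_vec (2*m)" by (rule mult_mat_vec_carrier[OF mb(4) b])
    show "convergent (\<lambda>k. (((\<lambda>x. P_MBAS m M K \<nu> \<omega> \<alpha> *\<^sub>v x + Q_MBAS m M K \<nu> \<omega> \<alpha> *\<^sub>v b) ^^ k) x0) $ i)"
      by (rule iter_conv[OF mb(3) m2 sr c0 x0 i])
  qed
  show "spectral_radius (P_MBAS m M K \<nu> \<omega> \<alpha>) \<le> eta_MBAS M K \<nu> \<omega> \<alpha>
   \<and> eta_MBAS M K \<nu> \<omega> \<alpha> < 1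
   \<and> (\<forall>b x0. b \<in> carrier_vec (2*m) \<longrightarrow> x0 \<in> carrier_vec (2*m) \<longrightarrow>
        (\<forall>i < 2*m. convergent (\<lambda>k.
           (((\<lambda>x. P_MBAS m M K \<nu> \<omega> \<alpha> *\<^sub>v x + Q_MBAS m M K \<nu> \<omega> \<alpha> *\<^sub>v b) ^^ k) x0) $ i)))"
    using mb(1,2) conv by blast
qed

end
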